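(* Let $1\le q<\infty$ and $\alpha\ge0$. Then $\|f\|_{\mathfrak L^{q,\infty}(\log\mathfrak L)^\alpha}\le\|f\|_{L^q(\log L)^\alpha}$ for all $f\in L^q(\log L)^\alpha$, and $\|f\|_{L^{q,\infty}(\log L)^\alpha}\le\|f\|_{\mathfrak L^{q,\infty}(\log\mathfrak L)^\alpha}$ for all $f\in\mathfrak L^{q,\infty}(\log\mathfrak L)^\alpha$. Furthermore, if $\alpha>0$, then $L^q(\log L)^\alpha\subsetneq\mathfrak L^{q,\infty}(\log\mathfrak L)^\alpha\subsetneq L^{q,\infty}(\log L)^\alpha$.
   Context: All functions are on $\mathbb R^n$. For measurable $f$, $f^*(s):=\inf\{\lambda>0:|\{|f|>\lambda\}|\le s\}$ ($s\ge0$) is the non-increasing rearrangement. $\|f\|_{L^q(\log L)^\alpha}:=(\int_0^\infty[\log(e+1/s)]^\alpha f^*(s)^q\,ds)^{1/q}$, $\|f\|_{L^{q,\infty}(\log L)^\alpha}:=\sup_{s>0}\{[\log(e+1/s)]^\alpha sf^*(s)^q\}^{1/q}$, and $\|f\|_{\mathfrak L^{q,\infty}(\log\mathfrak L)^\alpha}:=\sup_{s>0}\{[\log(e+1/s)]^\alpha\sup_{|E|=s}\int_E|f|^q\,dx\}^{1/q}$ (inner sup over measurable $E$ with $|E|=s$); each space is the set of $f\in L^1_{\rm loc}$ with the corresponding norm finite. *)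

theory Defs
  imports "HOL-Analysis.Analysis"
begin

definition enn_powr :: "ennreal \<Rightarrow> real \<Rightarrow> ennreal" where
  "enn_powr x p = (if x = top then top else ennreal (enn2real x powr p))"

definition L1_loc :: "('a::euclidean_space \<Rightarrow> real) set" where
  "L1_loc = {f. f \<in> borel_measurable lebesgue \<and>
                 (\<forall>K. compact K \<longrightarrow> set_integrable lebesgue K f)}"

text \<open>Non-increasing rearrangement f*(s) = inf {lambda > 0 : |{|f| > lambda}| <= s}
  (value top if the set is empty).\<close>
definition rearr :: "('a::euclidean_space \<Rightarrow> real) \<Rightarrow> real \<Rightarrow> ennreal" where
  "rearr f s = Inf {ennreal t | t. t > 0 \<and>
                  emeasure lebesgue {x. \<bar>f x\<bar> > t} \<le> ennreal s}"

definition logw :: "real \<Rightarrow> real \<Rightarrow> real" where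
  "logw \<alpha> s = (ln (exp 1 + 1 / s)) powr \<alpha>"

definition LqlogL_norm :: "real \<Rightarrow> real \<Rightarrow> ('a::euclidean_space \<Rightarrow> real) \<Rightarrow> ennreal" where
  "LqlogL_norm q \<alpha> f =
     enn_powr (\<integral>\<^sup>+ s \<in> {0<..}. ennreal (logw \<alpha> s) * enn_powr (rearr f s) q \<partial>lborel) (1 / q)"

definition weak_LqlogL_norm :: "real \<Rightarrow> real \<Rightarrow> ('a::euclidean_space \<Rightarrow> real) \<Rightarrow> ennreal" where
  "weak_LqlogL_norm q \<alpha> f =
     (SUP s \<in> {0<..}. enn_powr (ennreal (logw \<alpha> s * s) * enn_powr (rearr f s) q) (1 / q))"

definition frak_LqlogL_norm :: "real \<Rightarrow> real \<Rightarrow> ('a::euclidean_space \<Rightarrow> real) \<Rightarrow> ennreal" where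
  "frak_LqlogL_norm q \<alpha> f =
     (SUP s \<in> {0<..}. enn_powr (ennreal (logw \<alpha> s) *
        (SUP E \<in> {E \<in> sets lebesgue. emeasure lebesgue E = ennreal s}.
           \<integral>\<^sup>+ x \<in> E. ennreal (\<bar>f x\<bar> powr q) \<partial>lebesgue)) (1 / q))"

definition LqlogL :: "real \<Rightarrow> real \<Rightarrow> ('a::euclidean_space \<Rightarrow> real) set" where
  "LqlogL q \<alpha> = {f \<in> L1_loc. LqlogL_norm q \<alpha> f < top}"

definition weak_LqlogL :: "real \<Rightarrow> real \<Rightarrow> ('a::euclidean_space \<Rightarrow> real) set" where
  "weak_LqlogL q \<alpha> = {f \<in> L1_loc. weak_LqlogL_norm q \<alpha> f < top}"

definition frak_LqlogL :: "real \<Rightarrow> real \<Rightarrow> ('a::euclidean_space \<Rightarrow> real) set" where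
  "frak_LqlogL q \<alpha> = {f \<in> L1_loc. frak_LqlogL_norm q \<alpha> f < top}"

end

theory Submission
  imports Defs
begin

lemma antimono_borel:
  fixes F :: "real \<Rightarrow> ennreal"
  assumes "\<And>x y. x \<le> y \<Longrightarrow> F y \<le> F x"
  shows "F \<in> borel_measurable borel"
proof (rule borel_measurableI_greater)
  fix y
  show "{x \<in> space borel. y < F x} \<in> sets borel"
    apply (rule real_interval_borel_measurable)
    unfolding is_interval_1 by (metis (mono_tags, lifting) assms mem_Collect_eq order_less_le_trans space_borel UNIV_I)
qed

lemma sigma_finite_lebesgue: "sigma_finite_measure (lebesgue :: 'a::euclidean_space measure)"
proof
  show "\<exists>A. countable A \<and> A \<subseteq> sets (lebesgue :: 'a measure) \<and> \<Union> A = space lebesgue \<and> (\<forall>a\<in>A. emeasure lebesgue a \<noteq> \<infinity>)"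
  proof (intro exI[of _ "range (\<lambda>n::nat. cball (0::'a) (real n))"] conjI ballI)
    show "\<Union> (range (\<lambda>n::nat. cball (0::'a) (real n))) = space lebesgue"
      by (auto simp: real_arch_simple)
    fix a assume "a \<in> range (\<lambda>n::nat. cball (0::'a) (real n))"
    then obtain n::nat where "a = cball (0::'a) (real n)" by auto
    then show "emeasure lebesgue a \<noteq> \<infinity>"
      using emeasure_lborel_cball_finite[of "0::'a" "real n"] by simp
  qed (simp_all add: image_subset_iff)
qed

lemma emeasure_level_interval:
  fixes y :: ennreal
  shows "emeasure lborel {t::real. 0 \<le> t \<and> ennreal t < y} = y"
proof (cases y)
  case (real r)
  then have "{t::real. 0 \<le> t \<and> ennreal t < y} = {0..<r}"
    by (auto simp: ennreal_less_iff)
  then show ?thesis using real by simp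
next
  case top
  then have "{t::real. 0 \<le> t \<and> ennreal t < y} = {0..}" by auto
  have "emeasure lborel {0::real..} = top"
  proof (rule ccontr)
    assume "emeasure lborel {0::real..} \<noteq> top"
    then obtain n where n: "emeasure lborel {0::real..} < of_nat n"
      using ennreal_Ex_less_of_nat top.not_eq_extremum by blast
    have "emeasure lborel {0::real..<real n} \<le> emeasure lborel {0::real..}"
      by (rule emeasure_mono) auto
    then show False using n by (simp add: ennreal_of_nat_eq_real_of_nat)
  qed
  then show ?thesis using top \<open>_ = {0..}\<close> by simp
qed

lemma layer_cake:
  assumes sf: "sigma_finite_measure M" and g[measurable]: "g \<in> borel_measurable M"
  shows "(\<integral>\<^sup>+x. g x \<partial>M) = (\<integral>\<^sup>+t\<in>{0..}. emeasure M {x\<in>space M. ennreal t < g x} \<partial>lborel)"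
proof -
  interpret pair_sigma_finite M lborel
    using sf by (simp add: pair_sigma_finite.intro lborel.sigma_finite_measure_axioms)
  define h :: "'a \<Rightarrow> real \<Rightarrow> ennreal" where "h x t = indicator {t::real. 0 \<le> t \<and> ennreal t < g x} t" for x t
  have hm: "(\<lambda>(x,t). h x t) \<in> borel_measurable (M \<Otimes>\<^sub>M lborel)"
    unfolding h_def indicator_def by measurable
  have "(\<integral>\<^sup>+x. g x \<partial>M) = (\<integral>\<^sup>+x. (\<integral>\<^sup>+t. h x t \<partial>lborel) \<partial>M)"
    unfolding h_def by (simp add: emeasure_level_interval)
  also have "\<dots> = (\<integral>\<^sup>+t. (\<integral>\<^sup>+x. h x t \<partial>M) \<partial>lborel)"
    using Fubini'[OF hm] by simp
  also have "\<dots> = (\<integral>\<^sup>+t\<in>{0..}. emeasure M {x\<in>space M. ennreal t < g x} \<partial>lborel)"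
  proof (rule nn_integral_cong)
    fix t :: real
    have "(\<integral>\<^sup>+x. h x t \<partial>M) = (\<integral>\<^sup>+x. indicator {x\<in>space M. 0 \<le> t \<and> ennreal t < g x} x \<partial>M)"
      by (rule nn_integral_cong) (auto simp: h_def indicator_def)
    also have "\<dots> = emeasure M {x\<in>space M. 0 \<le> t \<and> ennreal t < g x}"
      by (rule nn_integral_indicator) measurable
    also have "\<dots> = indicator {0..} t * emeasure M {x\<in>space M. ennreal t < g x}"
      by (cases "0 \<le> t") auto
    finally show "(\<integral>\<^sup>+x. h x t \<partial>M) = emeasure M {x\<in>space M. ennreal t < g x} * indicator {0..} t"
      by (simp add: mult.commute)
  qed
  finally show ?thesis .
qed

abbreviation dist_fn :: "('a::euclidean_space \<Rightarrow> real) \<Rightarrow> real \<Rightarrow> ennreal" where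
  "dist_fn f \<mu> \<equiv> emeasure lebesgue {x. \<mu> < \<bar>f x\<bar>}"

lemma lev_meas:
  fixes f :: "'a::euclidean_space \<Rightarrow> real"
  assumes [measurable]: "f \<in> borel_measurable lebesgue"
  shows "{x. c < \<bar>f x\<bar>} \<in> sets lebesgue"
proof -
  have "{x \<in> space lebesgue. c < \<bar>f x\<bar>} \<in> sets lebesgue" by measurable
  then show ?thesis by simp
qed

lemma rearr_le_if:
  assumes "\<mu> > 0" "dist_fn f \<mu> \<le> ennreal t"
  shows "rearr f t \<le> ennreal \<mu>"
  unfolding rearr_def using assms by (intro Inf_lower) auto

lemma dist_le_if_rearr:
  fixes f :: "'a::euclidean_space \<Rightarrow> real"
  assumes fm: "f \<in> borel_measurable lebesgue" and mu: "\<mu> \<ge> 0"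
    and le: "rearr f t \<le> ennreal \<mu>"
  shows "dist_fn f \<mu> \<le> ennreal t"
proof -
  define A where "A n = {x. \<mu> + 1 / Suc n < \<bar>f x\<bar>}" for n :: nat
  have Am: "A n \<in> sets lebesgue" for n unfolding A_def using fm by (rule lev_meas)
  have inc: "incseq A"
    unfolding incseq_def A_def
  proof (intro allI impI subsetI)
    fix m n :: nat and x assume "m \<le> n" "x \<in> {x. \<mu> + 1 / Suc m < \<bar>f x\<bar>}"
    moreover have "1 / real (Suc n) \<le> 1 / Suc m" using \<open>m \<le> n\<close> by (simp add: frac_le)
    ultimately show "x \<in> {x. \<mu> + 1 / Suc n < \<bar>f x\<bar>}" by auto
  qed
  have Ale: "emeasure lebesgue (A n) \<le> ennreal t" for n
  proof -
    have "rearr f t < ennreal (\<mu> + 1 / Suc n)"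
      using le mu by (simp add: ennreal_lessI order_le_less_trans)
    then obtain y where y: "y \<in> {ennreal \<tau> | \<tau>. \<tau> > 0 \<and> emeasure lebesgue {x. \<bar>f x\<bar> > \<tau>} \<le> ennreal t}"
      "y < ennreal (\<mu> + 1 / Suc n)"
      unfolding rearr_def by (auto simp: Inf_less_iff)
    then obtain \<tau> where tau: "y = ennreal \<tau>" "\<tau> > 0" "emeasure lebesgue {x. \<bar>f x\<bar> > \<tau>} \<le> ennreal t"
      by auto
    have "ennreal \<tau> < ennreal (\<mu> + 1 / Suc n)" using y(2) tau(1) by simp
    then have "\<tau> < \<mu> + 1 / Suc n" using ennreal_less_iff[of \<tau>] tau(2) by simp
    then have "A n \<subseteq> {x. \<bar>f x\<bar> > \<tau>}" unfolding A_def by auto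
    then have "emeasure lebesgue (A n) \<le> emeasure lebesgue {x. \<bar>f x\<bar> > \<tau>}"
      by (rule emeasure_mono) (use fm lev_meas in auto)
    then show ?thesis using tau(3) by simp
  qed
  have "(\<Union>n. A n) = {x. \<mu> < \<bar>f x\<bar>}"
  proof (intro set_eqI iffI)
    fix x assume "x \<in> {x. \<mu> < \<bar>f x\<bar>}"
    then have "\<bar>f x\<bar> - \<mu> > 0" by simp
    then obtain n :: nat where "1 / Suc n < \<bar>f x\<bar> - \<mu>"
      using nat_approx_posE by blast
    then have "x \<in> A n" unfolding A_def by simp
    then show "x \<in> (\<Union>n. A n)" by blast
  next
    fix x assume "x \<in> (\<Union>n. A n)"
    then show "x \<in> {x. \<mu> < \<bar>f x\<bar>}" unfolding A_def
      by auto (smt (verit) of_nat_0_le_iff divide_nonneg_nonneg)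
  qed
  moreover have "range A \<subseteq> sets lebesgue" using Am by auto
  then have "(SUP n. emeasure lebesgue (A n)) = emeasure lebesgue (\<Union>n. A n)"
    by (rule SUP_emeasure_incseq[OF _ inc])
  ultimately have "dist_fn f \<mu> = (SUP n. emeasure lebesgue (A n))" by (simp only:)
  also have "\<dots> \<le> ennreal t" using Ale by (simp add: SUP_least)
  finally show ?thesis .
qed

lemma enn_powr_mono:
  assumes "x \<le> y" "p > 0"
  shows "enn_powr x p \<le> enn_powr y p"
proof (cases "y = top")
  case True then show ?thesis by (simp add: enn_powr_def)
next
  case False
  then have "x \<noteq> top" using assms(1) top_unique by auto
  then obtain a b where ab: "x = ennreal a" "y = ennreal b" "0 \<le> a" "0 \<le> b"
    using False by (metis ennreal_cases)
  then have "a \<le> b" using assms(1) by simp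
  then show ?thesis using ab False \<open>x \<noteq> top\<close> assms(2)
    by (simp add: enn_powr_def powr_mono2)
qed

lemma enn_powr_gt:
  assumes "l \<ge> 0" "p > 0" "ennreal (l powr (1/p)) < x"
  shows "ennreal l < enn_powr x p"
proof (cases "x = top")
  case True then show ?thesis by (simp add: enn_powr_def)
next
  case False
  then obtain m where m: "x = ennreal m" "0 \<le> m" by (metis ennreal_cases)
  have lt: "l powr (1/p) < m" using assms(3) m by (simp add: ennreal_less_iff)
  have "l = (l powr (1/p)) powr p" using assms(1,2) by (simp add: powr_powr)
  also have "\<dots> < m powr p" using lt assms(2) by (simp add: powr_less_mono2)
  finally have "l < m powr p" .
  moreover have "0 < m powr p" using \<open>l < m powr p\<close> assms(1) by linarith
  ultimately show ?thesis using m False by (simp add: enn_powr_def ennreal_lessI)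
qed

lemma rearr_antimono:
  assumes "t \<le> t'"
  shows "rearr f t' \<le> rearr f t"
  unfolding rearr_def
proof (intro Inf_superset_mono subsetI)
  fix y assume "y \<in> {ennreal ta |ta. 0 < ta \<and> emeasure lebesgue {x. ta < \<bar>f x\<bar>} \<le> ennreal t}"
  then obtain ta where "y = ennreal ta" "0 < ta" "emeasure lebesgue {x. ta < \<bar>f x\<bar>} \<le> ennreal t" by auto
  moreover have "ennreal t \<le> ennreal t'" using assms by (rule ennreal_leI)
  ultimately show "y \<in> {ennreal ta |ta. 0 < ta \<and> emeasure lebesgue {x. ta < \<bar>f x\<bar>} \<le> ennreal t'}"
    by (metis (mono_tags, lifting) mem_Collect_eq order_trans)
qed

lemma F_borel:
  assumes "p > 0"
  shows "(\<lambda>t. enn_powr (rearr f t) p) \<in> borel_measurable borel"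
  by (rule antimono_borel) (intro enn_powr_mono rearr_antimono assms)

lemma powr_level:
  assumes "l \<ge> 0" "p > 0"
  shows "(l < \<bar>a::real\<bar> powr p) \<longleftrightarrow> (l powr (1/p) < \<bar>a\<bar>)"
proof
  assume "l < \<bar>a\<bar> powr p"
  then have "l powr (1/p) < (\<bar>a\<bar> powr p) powr (1/p)"
    using assms by (intro powr_less_mono2) auto
  then show "l powr (1/p) < \<bar>a\<bar>" using assms by (simp add: powr_powr)
next
  assume "l powr (1/p) < \<bar>a\<bar>"
  then have "(l powr (1/p)) powr p < \<bar>a\<bar> powr p"
    using assms by (intro powr_less_mono2) auto
  then show "l < \<bar>a\<bar> powr p" using assms by (simp add: powr_powr)
qed

lemma HL:
  fixes f :: "'a::euclidean_space \<Rightarrow> real"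
  assumes fm[measurable]: "f \<in> borel_measurable lebesgue" and p: "p > 0"
    and E[measurable]: "E \<in> sets lebesgue" and Es: "emeasure lebesgue E \<le> ennreal s" and s: "s \<ge> 0"
  shows "(\<integral>\<^sup>+x\<in>E. ennreal (\<bar>f x\<bar> powr p) \<partial>lebesgue)
           \<le> (\<integral>\<^sup>+t\<in>{0<..<s}. enn_powr (rearr f t) p \<partial>lborel)"
proof -
  let ?g = "\<lambda>x. ennreal (\<bar>f x\<bar> powr p) * indicator E x"
  let ?F = "\<lambda>t. enn_powr (rearr f t) p * indicator {0<..<s} t"
  have gm: "?g \<in> borel_measurable lebesgue" by measurable
  have Fb[measurable]: "(\<lambda>t. enn_powr (rearr f t) p) \<in> borel_measurable borel" using F_borel[OF p] .
  have Fm: "?F \<in> borel_measurable lborel" by measurable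
  have "(\<integral>\<^sup>+x\<in>E. ennreal (\<bar>f x\<bar> powr p) \<partial>lebesgue)
      = (\<integral>\<^sup>+l\<in>{0..}. emeasure lebesgue {x\<in>space lebesgue. ennreal l < ?g x} \<partial>lborel)"
    by (rule layer_cake[OF sigma_finite_lebesgue gm])
  also have "\<dots> \<le> (\<integral>\<^sup>+l\<in>{0..}. emeasure lborel {t\<in>space lborel. ennreal l < ?F t} \<partial>lborel)"
  proof (rule nn_integral_mono)
    fix l :: real
    show "emeasure lebesgue {x\<in>space lebesgue. ennreal l < ?g x} * indicator {0..} l
        \<le> emeasure lborel {t\<in>space lborel. ennreal l < ?F t} * indicator {0..} l"
    proof (cases "l \<ge> 0")
      case False then show ?thesis by simp
    next
      case l: True
      define D where "D = dist_fn f (l powr (1/p))"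
      have A: "{x\<in>space lebesgue. ennreal l < ?g x} = E \<inter> {x. l powr (1/p) < \<bar>f x\<bar>}"
      proof (intro set_eqI)
        fix x
        have "(ennreal l < ?g x) \<longleftrightarrow> (x \<in> E \<and> l < \<bar>f x\<bar> powr p)"
          by (cases "x \<in> E") (simp_all add: ennreal_less_iff[OF l])
        then show "(x \<in> {x\<in>space lebesgue. ennreal l < ?g x}) = (x \<in> E \<inter> {x. l powr (1/p) < \<bar>f x\<bar>})"
          using powr_level[OF l p, of "f x"] by simp
      qed
      have B: "{t::real. 0 < t \<and> t < s \<and> ennreal t < D} \<subseteq> {t\<in>space lborel. ennreal l < ?F t}"
      proof (intro subsetI)
        fix t assume "t \<in> {t::real. 0 < t \<and> t < s \<and> ennreal t < D}"
        then have t: "0 < t" "t < s" "ennreal t < D" by auto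
        have "\<not> rearr f t \<le> ennreal (l powr (1/p))"
        proof
          assume "rearr f t \<le> ennreal (l powr (1/p))"
          have "D \<le> ennreal t" unfolding D_def by (rule dist_le_if_rearr[OF fm powr_ge_zero]) fact
          with t(3) show False using leD by blast
        qed
        then have "ennreal (l powr (1/p)) < rearr f t" by (simp only: not_le)
        then have lt: "ennreal l < enn_powr (rearr f t) p" by (rule enn_powr_gt[OF l p])
        have "?F t = enn_powr (rearr f t) p" using t by (simp add: indicator_def)
        then show "t \<in> {t\<in>space lborel. ennreal l < ?F t}" using lt by simp
      qed
      have C: "emeasure lebesgue (E \<inter> {x. l powr (1/p) < \<bar>f x\<bar>})
               \<le> emeasure lborel {t::real. 0 < t \<and> t < s \<and> ennreal t < D}"
      proof (cases "ennreal s \<le> D")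
        case True
        have "ennreal t < D" if "0 < t" "t < s" for t
          using ennreal_lessI[OF _ that(2)] that True by (meson order_less_le_trans order_less_trans)
        then have set: "{t::real. 0 < t \<and> t < s \<and> ennreal t < D} = {0<..<s}"
          by auto
        have "emeasure lebesgue (E \<inter> {x. l powr (1/p) < \<bar>f x\<bar>}) \<le> emeasure lebesgue E"
          by (rule emeasure_mono[OF Int_lower1 E])
        also have "\<dots> \<le> ennreal s" by (rule Es)
        also have "ennreal s = emeasure lborel {t::real. 0 < t \<and> t < s \<and> ennreal t < D}"
          unfolding set using s by simp
        finally show ?thesis .
      next
        case False
        then have "D < ennreal s" by simp
        then have "D \<noteq> top" by auto
        then obtain d where d0: "D = ennreal d" "0 \<le> d" by (cases D) auto
        with \<open>D < ennreal s\<close> have "d < s" by (simp add: ennreal_less_iff)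
        have set: "{t::real. 0 < t \<and> t < s \<and> ennreal t < D} = {0<..<d}"
          using d0 \<open>d < s\<close> by (auto simp: ennreal_less_iff)
        have "emeasure lebesgue (E \<inter> {x. l powr (1/p) < \<bar>f x\<bar>}) \<le> D"
          unfolding D_def by (rule emeasure_mono[OF Int_lower2 lev_meas[OF fm]])
        also have "D = emeasure lborel {t::real. 0 < t \<and> t < s \<and> ennreal t < D}"
          unfolding set using d0 by simp
        finally show ?thesis .
      qed
      have "emeasure lborel {t::real. 0 < t \<and> t < s \<and> ennreal t < D} \<le> emeasure lborel {t\<in>space lborel. ennreal l < ?F t}"
        by (rule emeasure_mono[OF B]) measurable
      with A C show ?thesis using l by simp
    qed
  qed
  also have "\<dots> = (\<integral>\<^sup>+t. ?F t \<partial>lborel)"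
    by (rule layer_cake[OF sigma_finite_lborel Fm, symmetric])
  finally show ?thesis .
qed

lemma measure_cball_leb:
  "measure lebesgue (cball (0::'a::euclidean_space) r) = unit_ball_vol (DIM('a)) * (max r 0) ^ DIM('a)"
proof (cases "r \<ge> 0")
  case True
  then show ?thesis using content_cball[OF True, of "0::'a"] by (simp add: max_def)
next
  case False
  then have "cball (0::'a) r = {}" by auto
  then show ?thesis using False by (simp add: max_def)
qed

lemma nonatomic:
  fixes A :: "'a::euclidean_space set"
  assumes A: "A \<in> sets lebesgue" and s: "s \<ge> 0" and lt: "ennreal s < emeasure lebesgue A"
  shows "\<exists>E\<in>sets lebesgue. E \<subseteq> A \<and> emeasure lebesgue E = ennreal s"
proof -
  define h where "h r = unit_ball_vol (DIM('a)) * (max r 0) ^ DIM('a)" for r :: real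
  define B where "B r = A \<inter> cball (0::'a) r" for r
  define g where "g r = measure lebesgue (B r)" for r
  have cf: "cball (0::'a) r \<in> fmeasurable lebesgue" for r using lmeasurable_cball by blast
  have Bf: "B r \<in> fmeasurable lebesgue" for r
    unfolding B_def by (rule fmeasurableI2[OF cf]) (auto intro: A)
  have hmono: "h r \<le> h r'" if "r \<le> r'" for r r'
    unfolding h_def using that
    by (intro mult_left_mono power_mono) (auto simp: max_def)
  have key: "g r' - g r \<le> h r' - h r" "g r \<le> g r'" if "r \<le> r'" for r r'
  proof -
    have sub: "B r \<subseteq> B r'" unfolding B_def using that by auto
    have "g r' - g r = measure lebesgue (B r' - B r)"
      unfolding g_def using measurable_measure_Diff[OF Bf fmeasurableD[OF Bf] sub] by simp
    also have "\<dots> \<le> measure lebesgue (cball (0::'a) r' - cball 0 r)"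
    proof (rule measure_mono_fmeasurable)
      show "B r' - B r \<in> sets lebesgue" using fmeasurableD[OF Bf] by blast
      show "cball (0::'a) r' - cball 0 r \<in> fmeasurable lebesgue"
        by (rule fmeasurable_Diff[OF cf fmeasurableD[OF cf]])
    qed (auto simp: B_def)
    also have "\<dots> = h r' - h r"
      using measurable_measure_Diff[OF cf[of r'] fmeasurableD[OF cf[of r]]] that
      by (simp only: measure_cball_leb h_def) (meson subset_cball)
    finally show "g r' - g r \<le> h r' - h r" .
    show "g r \<le> g r'" unfolding g_def by (rule measure_mono_fmeasurable[OF sub]) (use Bf in auto)
  qed
  have habs: "\<bar>g x - g y\<bar> \<le> \<bar>h x - h y\<bar>" for x y
  proof (cases "x \<le> y")
    case True then show ?thesis using key[OF True] hmono[OF True] by linarith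
  next
    case False then have "y \<le> x" by simp
    then show ?thesis using key[OF \<open>y \<le> x\<close>] hmono[OF \<open>y \<le> x\<close>] by linarith
  qed
  have hc: "continuous_on UNIV h" unfolding h_def by (intro continuous_intros)
  have gc: "continuous_on S g" for S
    unfolding continuous_on_iff
  proof (intro ballI allI impI)
    fix x e assume "x \<in> S" "(0::real) < e"
    from hc[unfolded continuous_on_iff] \<open>0 < e\<close> obtain d where d: "d > 0" "\<forall>x'. dist x' x < d \<longrightarrow> dist (h x') (h x) < e"
      by blast
    show "\<exists>d>0. \<forall>x'\<in>S. dist x' x < d \<longrightarrow> dist (g x') (g x) < e"
      using d habs by (intro exI[of _ d]) (auto simp: dist_real_def intro: le_less_trans)
  qed
  have g0: "g 0 \<le> s"
  proof -
    have "g 0 \<le> measure lebesgue (cball (0::'a) 0)"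
      unfolding g_def by (rule measure_mono_fmeasurable[OF _ fmeasurableD[OF Bf] cf]) (auto simp: B_def)
    then show ?thesis using s by (simp add: measure_cball_leb)
  qed
  have inc: "incseq (\<lambda>n::nat. B (real n))" unfolding incseq_def B_def by auto
  have "(\<Union>n::nat. B (real n)) = A" unfolding B_def by (auto simp: real_arch_simple)
  moreover have "range (\<lambda>n::nat. B (real n)) \<subseteq> sets lebesgue" using fmeasurableD[OF Bf] by auto
  then have "(SUP n. emeasure lebesgue (B (real n))) = emeasure lebesgue (\<Union>n::nat. B (real n))"
    by (rule SUP_emeasure_incseq[OF _ inc])
  ultimately have "ennreal s < (SUP n. emeasure lebesgue (B (real n)))" using lt by simp
  then obtain n :: nat where n: "ennreal s < emeasure lebesgue (B (real n))"
    by (auto simp: less_SUP_iff)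
  have "emeasure lebesgue (B (real n)) = ennreal (g (real n))"
    unfolding g_def using emeasure_eq_ennreal_measure[OF fmeasurableD2[OF Bf]] .
  with n have "ennreal s < ennreal (g (real n))" by simp
  then have "s < g (real n)" using ennreal_less_iff[OF s] by blast
  then have gn: "s \<le> g (real n)" by simp
  obtain r where r: "0 \<le> r" "r \<le> real n" "g r = s"
    using IVT'[of g 0 s "real n", OF g0 gn _ gc] by auto
  have "emeasure lebesgue (B r) = ennreal s"
    using emeasure_eq_ennreal_measure[OF fmeasurableD2[OF Bf]] r(3) unfolding g_def by simp
  moreover have "B r \<in> sets lebesgue" "B r \<subseteq> A" using fmeasurableD[OF Bf] by (auto simp: B_def)
  ultimately show ?thesis by blast
qed

lemma logw_ge1: "s > 0 \<Longrightarrow> \<alpha> \<ge> 0 \<Longrightarrow> 1 \<le> logw \<alpha> s"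
  unfolding logw_def
proof (rule ge_one_powr_ge_zero)
  assume "s > 0"
  have "0 < exp 1 + 1 / s" using \<open>s > 0\<close> by (intro add_pos_pos) auto
  then have "ln (exp 1) \<le> ln (exp 1 + 1 / s)" using \<open>s > 0\<close> by (subst ln_le_cancel_iff) auto
  then show "1 \<le> ln (exp 1 + 1 / s)" by simp
qed

lemma logw_nonneg: "s > 0 \<Longrightarrow> \<alpha> \<ge> 0 \<Longrightarrow> 0 \<le> logw \<alpha> s"
  using logw_ge1[of s \<alpha>] by linarith

lemma logw_anti:
  assumes "0 < t" "t \<le> s" "\<alpha> \<ge> 0"
  shows "logw \<alpha> s \<le> logw \<alpha> t"
  unfolding logw_def
proof (rule powr_mono2)
  have "1 / s \<le> 1 / t" using assms by (simp add: frac_le)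
  moreover have "0 < exp 1 + 1 / s" "0 < exp 1 + 1 / t" using assms by (intro add_pos_pos; simp)+
  ultimately show "ln (exp 1 + 1 / s) \<le> ln (exp 1 + 1 / t)"
    by (subst ln_le_cancel_iff) auto
  have "0 < exp 1 + 1 / s" using assms by (intro add_pos_pos) auto
  then have "ln (exp 1) \<le> ln (exp 1 + 1 / s)" using assms by (subst ln_le_cancel_iff) auto
  then show "0 \<le> ln (exp 1 + 1 / s)" by simp
qed (use assms in auto)

abbreviation SupE :: "('a::euclidean_space \<Rightarrow> real) \<Rightarrow> real \<Rightarrow> real \<Rightarrow> ennreal" where
  "SupE f q s \<equiv> (SUP E \<in> {E \<in> sets lebesgue. emeasure lebesgue E = ennreal s}.
           \<integral>\<^sup>+ x \<in> E. ennreal (\<bar>f x\<bar> powr q) \<partial>lebesgue)"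

lemma part1:
  fixes f :: "'a::euclidean_space \<Rightarrow> real"
  assumes fm[measurable]: "f \<in> borel_measurable lebesgue" and q: "1 \<le> q" and a: "\<alpha> \<ge> 0"
  shows "frak_LqlogL_norm q \<alpha> f \<le> LqlogL_norm q \<alpha> f"
  unfolding frak_LqlogL_norm_def LqlogL_norm_def
proof (rule SUP_least)
  fix s :: real assume "s \<in> {0<..}"
  then have s: "s > 0" by simp
  have q0: "q > 0" using q by simp
  have Fb[measurable]: "(\<lambda>t. enn_powr (rearr f t) q) \<in> borel_measurable borel" using F_borel[OF q0] .
  have "SupE f q s \<le> (\<integral>\<^sup>+t\<in>{0<..<s}. enn_powr (rearr f t) q \<partial>lborel)"
  proof (rule SUP_least)
    fix E :: "'a set" assume "E \<in> {E \<in> sets lebesgue. emeasure lebesgue E = ennreal s}"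
    then show "(\<integral>\<^sup>+ x \<in> E. ennreal (\<bar>f x\<bar> powr q) \<partial>lebesgue) \<le> (\<integral>\<^sup>+t\<in>{0<..<s}. enn_powr (rearr f t) q \<partial>lborel)"
      using s by (intro HL[OF fm q0]) auto
  qed
  then have "ennreal (logw \<alpha> s) * SupE f q s \<le> ennreal (logw \<alpha> s) * (\<integral>\<^sup>+t\<in>{0<..<s}. enn_powr (rearr f t) q \<partial>lborel)"
    by (rule mult_left_mono) simp
  also have "\<dots> = (\<integral>\<^sup>+t. ennreal (logw \<alpha> s) * (enn_powr (rearr f t) q * indicator {0<..<s} t) \<partial>lborel)"
    by (rule nn_integral_cmult[symmetric]) measurable
  also have "\<dots> \<le> (\<integral>\<^sup>+t\<in>{0<..}. ennreal (logw \<alpha> t) * enn_powr (rearr f t) q \<partial>lborel)"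
  proof (rule nn_integral_mono)
    fix t :: real
    show "ennreal (logw \<alpha> s) * (enn_powr (rearr f t) q * indicator {0<..<s} t)
          \<le> ennreal (logw \<alpha> t) * enn_powr (rearr f t) q * indicator {0<..} t"
    proof (cases "0 < t \<and> t < s")
      case True
      then have "ennreal (logw \<alpha> s) \<le> ennreal (logw \<alpha> t)"
        using logw_anti[of t s \<alpha>] a by (intro ennreal_leI) auto
      then show ?thesis using True by (simp add: mult_right_mono)
    next
      case False then show ?thesis by (simp add: indicator_def)
    qed
  qed
  finally show "enn_powr (ennreal (logw \<alpha> s) * SupE f q s) (1 / q)
      \<le> enn_powr (\<integral>\<^sup>+t\<in>{0<..}. ennreal (logw \<alpha> t) * enn_powr (rearr f t) q \<partial>lborel) (1 / q)"
    by (rule enn_powr_mono) (use q0 in simp)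
qed

lemma part2_lower:
  fixes f :: "'a::euclidean_space \<Rightarrow> real"
  assumes fm[measurable]: "f \<in> borel_measurable lebesgue" and q: "q > 0" and s: "s > 0"
    and l: "l > 0" "ennreal l < rearr f s"
  shows "ennreal (s * l powr q) \<le> SupE f q s"
proof -
  have "\<not> dist_fn f l \<le> ennreal s"
  proof
    assume "dist_fn f l \<le> ennreal s"
    then have "rearr f s \<le> ennreal l" by (rule rearr_le_if[OF l(1)])
    with l(2) show False using leD by blast
  qed
  then have "ennreal s < dist_fn f l" by (simp add: not_le)
  then obtain E where E: "E \<in> sets lebesgue" "E \<subseteq> {x. l < \<bar>f x\<bar>}" "emeasure lebesgue E = ennreal s"
    using nonatomic[OF lev_meas[OF fm] less_imp_le[OF s]] by blast
  have "ennreal (s * l powr q) = ennreal (l powr q) * emeasure lebesgue E"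
    using E(3) s by (simp add: ennreal_mult mult.commute)
  also have "\<dots> = (\<integral>\<^sup>+x. ennreal (l powr q) * indicator E x \<partial>lebesgue)"
    by (rule nn_integral_cmult_indicator[symmetric, OF E(1)])
  also have "\<dots> \<le> (\<integral>\<^sup>+x\<in>E. ennreal (\<bar>f x\<bar> powr q) \<partial>lebesgue)"
  proof (rule nn_integral_mono)
    fix x
    show "ennreal (l powr q) * indicator E x \<le> ennreal (\<bar>f x\<bar> powr q) * indicator E x"
    proof (cases "x \<in> E")
      case True
      then have "l < \<bar>f x\<bar>" using E(2) by auto
      then have "l powr q \<le> \<bar>f x\<bar> powr q" using l q by (intro powr_mono2) auto
      then show ?thesis using True by (simp add: ennreal_leI)
    qed simp
  qed
  also have "\<dots> \<le> SupE f q s" by (rule SUP_upper) (use E in auto)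
  finally show ?thesis .
qed

lemma part2_key:
  fixes f :: "'a::euclidean_space \<Rightarrow> real"
  assumes fm[measurable]: "f \<in> borel_measurable lebesgue" and q: "q > 0" and s: "s > 0"
  shows "ennreal s * enn_powr (rearr f s) q \<le> SupE f q s"
proof (cases "rearr f s = top")
  case True
  have "SupE f q s = top"
  proof (rule ccontr)
    assume "SupE f q s \<noteq> top"
    then obtain n where n: "SupE f q s < of_nat n"
      using ennreal_Ex_less_of_nat top.not_eq_extremum by blast
    define l where "l = ((real n + 1) / s) powr (1 / q)"
    have l0: "l > 0" unfolding l_def using s by simp
    have "s * l powr q = s * ((real n + 1) / s)" unfolding l_def using s q by (simp add: powr_powr)
    also have "\<dots> = real n + 1" using s by simp
    finally have "ennreal (real n + 1) \<le> SupE f q s"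
      using part2_lower[OF fm q s l0] True by simp
    moreover have "of_nat n < ennreal (real n + 1)"
      by (simp add: ennreal_of_nat_eq_real_of_nat ennreal_lessI)
    ultimately show False using n by simp
  qed
  then show ?thesis by (metis top_greatest)
next
  case False
  then obtain m where m: "rearr f s = ennreal m" "0 \<le> m" by (cases "rearr f s") auto
  show ?thesis
  proof (cases "m = 0")
    case True
    then show ?thesis using m by (simp add: enn_powr_def)
  next
    case m0: False
    then have mpos: "m > 0" using m by simp
    have lhs: "ennreal s * enn_powr (rearr f s) q = ennreal (s * m powr q)"
      using m s by (simp add: enn_powr_def ennreal_mult)
    show ?thesis
    proof (cases "SupE f q s = top")
      case True then show ?thesis by (metis top_greatest)
    next
      case False
      then obtain c where c: "SupE f q s = ennreal c" "0 \<le> c" by (cases "SupE f q s") auto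
      have "m \<le> (c / s) powr (1 / q)"
      proof (rule dense_le_bounded[OF mpos])
        fix w assume w: "0 < w" "w < m"
        have "ennreal (s * w powr q) \<le> ennreal c"
          using part2_lower[OF fm q s w(1)] w m c by (simp add: ennreal_lessI)
        then have "s * w powr q \<le> c" using c(2) by simp
        then have "w powr q \<le> c / s" using s by (simp add: field_simps)
        then have "(w powr q) powr (1/q) \<le> (c / s) powr (1/q)"
          using q w by (intro powr_mono2) auto
        then show "w \<le> (c / s) powr (1 / q)" using q w by (simp add: powr_powr)
      qed
      then have "m powr q \<le> ((c / s) powr (1 / q)) powr q" using q m by (intro powr_mono2) auto
      also have "\<dots> = c / s" using q s c by (simp add: powr_powr)
      finally have "s * m powr q \<le> c" using s by (simp add: field_simps)
      then show ?thesis using lhs c by simp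
    qed
  qed
qed

lemma part2:
  fixes f :: "'a::euclidean_space \<Rightarrow> real"
  assumes fm[measurable]: "f \<in> borel_measurable lebesgue" and q: "1 \<le> q" and a: "\<alpha> \<ge> 0"
  shows "weak_LqlogL_norm q \<alpha> f \<le> frak_LqlogL_norm q \<alpha> f"
  unfolding frak_LqlogL_norm_def weak_LqlogL_norm_def
proof (rule SUP_mono)
  fix s :: real assume "s \<in> {0<..}"
  then have s: "s > 0" by simp
  have q0: "q > 0" using q by simp
  have "ennreal (logw \<alpha> s * s) * enn_powr (rearr f s) q
      = ennreal (logw \<alpha> s) * (ennreal s * enn_powr (rearr f s) q)"
    using s logw_nonneg[OF s a] by (simp add: ennreal_mult mult.assoc)
  also have "\<dots> \<le> ennreal (logw \<alpha> s) * SupE f q s"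
    by (rule mult_left_mono[OF part2_key[OF fm q0 s]]) simp
  finally have "enn_powr (ennreal (logw \<alpha> s * s) * enn_powr (rearr f s) q) (1 / q)
      \<le> enn_powr (ennreal (logw \<alpha> s) * SupE f q s) (1 / q)"
    by (rule enn_powr_mono) (use q0 in simp)
  then show "\<exists>s'\<in>{0<..}. enn_powr (ennreal (logw \<alpha> s * s) * enn_powr (rearr f s) q) (1 / q)
      \<le> enn_powr (ennreal (logw \<alpha> s') * SupE f q s') (1 / q)"
    using s by blast
qed

definition Tm :: "'a::euclidean_space \<Rightarrow> real" where
  "Tm x = unit_ball_vol (DIM('a)) * norm x ^ DIM('a)"

lemma Tm_nonneg: "Tm x \<ge> 0"
  unfolding Tm_def by simp

lemma Tm_borel[measurable]: "Tm \<in> borel_measurable borel"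
  unfolding Tm_def by measurable

lemma Tm_leb[measurable]: "(Tm :: 'a::euclidean_space \<Rightarrow> real) \<in> borel_measurable lebesgue"
  using measurable_completion[of Tm lborel borel] Tm_borel by simp

lemma Tm_lt_ball:
  assumes c: "c > 0"
  shows "{x::'a::euclidean_space. Tm x < c} = ball 0 (root DIM('a) (c / unit_ball_vol (DIM('a))))"
proof -
  let ?n = "DIM('a)" and ?w = "unit_ball_vol (DIM('a))"
  have w: "?w > 0" by simp
  have n: "?n > 0" by simp
  have y: "c / ?w > 0" using c w by simp
  let ?r = "root ?n (c / ?w)"
  have rpow: "?r ^ ?n = c / ?w" using n y by (simp add: real_root_pow_pos2)
  have r0: "?r \<ge> 0" using y by simp
  have "Tm x < c \<longleftrightarrow> norm x < ?r" for x :: 'a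
  proof -
    have "Tm x < c \<longleftrightarrow> norm x ^ ?n < c / ?w" unfolding Tm_def using w
      by (simp add: field_simps mult.commute)
    also have "\<dots> \<longleftrightarrow> norm x < ?r"
    proof
      assume "norm x ^ ?n < c / ?w"
      then have "norm x ^ ?n < ?r ^ ?n" using rpow by simp
      then show "norm x < ?r" using r0 by (rule power_less_imp_less_base)
    next
      assume "norm x < ?r"
      then have "norm x ^ ?n < ?r ^ ?n" using n by (intro power_strict_mono) auto
      then show "norm x ^ ?n < c / ?w" using rpow by simp
    qed
    finally show ?thesis .
  qed
  then show ?thesis by (simp add: set_eq_iff dist_norm)
qed

lemma emeasure_Tm_lt:
  "emeasure lebesgue {x::'a::euclidean_space. Tm x < c} = ennreal (max c 0)"
proof (cases "c > 0")
  case True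
  let ?n = "DIM('a)" and ?w = "unit_ball_vol (DIM('a))"
  have w: "?w > 0" by simp
  have y: "c / ?w > 0" using True w by simp
  have "emeasure lebesgue {x::'a. Tm x < c} = emeasure lborel (ball (0::'a) (root ?n (c / ?w)))"
    unfolding Tm_lt_ball[OF True] by simp
  also have "\<dots> = ennreal (?w * (root ?n (c / ?w)) ^ ?n)"
    using y by (intro emeasure_ball) simp
  also have "(root ?n (c / ?w)) ^ ?n = c / ?w" using y by (simp add: real_root_pow_pos2)
  finally show ?thesis using True w by simp
next
  case False
  have "\<not> Tm x < c" for x :: 'a using Tm_nonneg[of x] False by linarith
  then have "{x::'a. Tm x < c} = {}" by blast
  then show ?thesis using False by simp
qed

lemma Tm_lt_sets: "{x::'a::euclidean_space. Tm x < c} \<in> sets lebesgue"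
proof -
  have "{x\<in>space lebesgue. Tm (x::'a) < c} \<in> sets lebesgue" by measurable
  then show ?thesis by simp
qed

lemma emeasure_Tm_Ico:
  "emeasure lebesgue {x::'a::euclidean_space. a \<le> Tm x \<and> Tm x < b} = ennreal (max b 0 - max a 0)"
proof (cases "a \<le> b")
  case True
  have eq: "{x::'a. a \<le> Tm x \<and> Tm x < b} = {x. Tm x < b} - {x. Tm x < a}" by auto
  have "emeasure lebesgue ({x::'a. Tm x < b} - {x. Tm x < a})
      = emeasure lebesgue {x::'a. Tm x < b} - emeasure lebesgue {x::'a. Tm x < a}"
  proof (rule emeasure_Diff)
    show "emeasure lebesgue {x::'a. Tm x < a} \<noteq> \<infinity>" unfolding emeasure_Tm_lt by simp
    show "{x::'a. Tm x < b} \<in> sets lebesgue" "{x::'a. Tm x < a} \<in> sets lebesgue" by (rule Tm_lt_sets)+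
    show "{x::'a. Tm x < a} \<subseteq> {x. Tm x < b}" using True by auto
  qed
  also have "\<dots> = ennreal (max b 0 - max a 0)" by (simp add: emeasure_Tm_lt ennreal_minus)
  finally show ?thesis using eq by simp
next
  case False
  then have "{x::'a. a \<le> Tm x \<and> Tm x < b} = {}" by auto
  moreover have "max b 0 - max a 0 \<le> 0" using False by auto
  ultimately show ?thesis by (metis emeasure_empty ennreal_eq_0_iff)
qed

lemma sets_borel_Ico: "sets (borel::real measure) = sigma_sets UNIV (range (\<lambda>(a,b). {a..<b::real}))"
  by (metis borel_eq_atLeastLessThan sets_measure_of top.extremum Pow_UNIV)

lemma distr_Tm: "distr lebesgue borel (Tm :: 'a::euclidean_space \<Rightarrow> real) = density lborel (indicator {0..})"
proof (rule measure_eqI_generator_eq_countable[where E = "range (\<lambda>(a,b). {a..<b::real})" and \<Omega> = UNIV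
      and A = "range (\<lambda>n::nat. {-real n..<real n})"])
  show "Int_stable (range (\<lambda>(a,b). {a..<b::real}))"
  proof (rule Int_stableI)
    fix X Y assume "X \<in> range (\<lambda>(a,b). {a..<b::real})" "Y \<in> range (\<lambda>(a,b). {a..<b::real})"
    then obtain a b c d where "X = {a..<b}" "Y = {c..<d}" by auto
    then have "X \<inter> Y = {max a c..<min b d}" by auto
    then show "X \<inter> Y \<in> range (\<lambda>(a,b). {a..<b::real})" by (auto intro!: image_eqI[where x="(max a c, min b d)"])
  qed
  show "range (\<lambda>(a,b). {a..<b::real}) \<subseteq> Pow UNIV" by simp
  have dI: "emeasure (density lborel (indicator {0..})) {a..<b} = ennreal (max b 0 - max a 0)" for a b :: real
  proof -
    have "emeasure (density lborel (indicator {0..})) {a..<b} = (\<integral>\<^sup>+x. indicator {0..} x * indicator {a..<b} x \<partial>lborel)"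
      by (rule emeasure_density) auto
    also have "\<dots> = (\<integral>\<^sup>+x. indicator {max a 0..<b} x \<partial>lborel)"
      by (rule nn_integral_cong) (auto simp: indicator_def)
    also have "\<dots> = emeasure lborel {max a 0..<b}" by simp
    also have "\<dots> = ennreal (max b 0 - max a 0)"
    proof (cases "max a 0 \<le> b")
      case True
      then have "max b 0 = b" by linarith
      then show ?thesis using True by simp
    next
      case False
      then have "{max a 0..<b} = {}" by auto
      moreover have "max b 0 - max a 0 \<le> 0" using False by auto
      ultimately show ?thesis by (metis emeasure_empty ennreal_eq_0_iff)
    qed
    finally show ?thesis .
  qed
  have mI: "emeasure (distr lebesgue borel (Tm :: 'a \<Rightarrow> real)) {a..<b} = ennreal (max b 0 - max a 0)" for a b :: real
  proof -
    have "emeasure (distr lebesgue borel (Tm :: 'a \<Rightarrow> real)) {a..<b} = emeasure lebesgue ((Tm :: 'a \<Rightarrow> real) -` {a..<b} \<inter> space lebesgue)"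
      by (rule emeasure_distr[OF Tm_leb]) auto
    also have "(Tm :: 'a \<Rightarrow> real) -` {a..<b} \<inter> space lebesgue = {x::'a. a \<le> Tm x \<and> Tm x < b}" by auto
    finally show ?thesis using emeasure_Tm_Ico by simp
  qed
  fix X assume "X \<in> range (\<lambda>(a,b). {a..<b::real})"
  then obtain a b where "X = {a..<b}" by auto
  then show "emeasure (distr lebesgue borel (Tm :: 'a \<Rightarrow> real)) X = emeasure (density lborel (indicator {0..})) X"
    using dI mI by simp
next
  show "sets (distr lebesgue borel (Tm :: 'a \<Rightarrow> real)) = sigma_sets UNIV (range (\<lambda>(a,b). {a..<b::real}))"
    using sets_borel_Ico by simp
  show "sets (density lborel (indicator {0..})) = sigma_sets UNIV (range (\<lambda>(a,b). {a..<b::real}))"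
    using sets_borel_Ico by simp
  show "range (\<lambda>n::nat. {-real n..<real n}) \<subseteq> range (\<lambda>(a,b). {a..<b::real})" by auto
  show "\<Union> (range (\<lambda>n::nat. {-real n..<real n})) = UNIV"
  proof (intro set_eqI iffI)
    fix x :: real
    obtain n :: nat where "\<bar>x\<bar> < real n" using reals_Archimedean2 by blast
    then have "x \<in> {-real n..<real n}" by auto
    then show "x \<in> \<Union> (range (\<lambda>n::nat. {-real n..<real n}))" by blast
  qed auto
  show "countable (range (\<lambda>n::nat. {-real n..<real n}))" by simp
  fix X assume "X \<in> range (\<lambda>n::nat. {-real n..<real n})"
  then obtain n :: nat where "X = {-real n..<real n}" by auto
  moreover have "emeasure (distr lebesgue borel (Tm :: 'a \<Rightarrow> real)) {-real n..<real n} \<noteq> \<infinity>"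
    by (subst emeasure_distr) (auto simp: vimage_def emeasure_Tm_Ico[of "-real n" "real n", unfolded atLeastLessThan_iff])
  ultimately show "emeasure (distr lebesgue borel (Tm :: 'a \<Rightarrow> real)) X \<noteq> \<infinity>" by simp
qed

lemma PF:
  assumes g[measurable]: "g \<in> borel_measurable borel"
  shows "(\<integral>\<^sup>+x. g (Tm (x::'a::euclidean_space)) \<partial>lebesgue) = (\<integral>\<^sup>+t\<in>{0..}. g t \<partial>lborel)"
proof -
  have "(\<integral>\<^sup>+x. g (Tm (x::'a)) \<partial>lebesgue) = (\<integral>\<^sup>+t. g t \<partial>distr lebesgue borel (Tm :: 'a \<Rightarrow> real))"
    by (rule nn_integral_distr[symmetric]) auto
  also have "\<dots> = (\<integral>\<^sup>+t. g t \<partial>density lborel (indicator {0..}))" by (simp only: distr_Tm)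
  also have "\<dots> = (\<integral>\<^sup>+t. indicator {0..} t * g t \<partial>lborel)"
    by (rule nn_integral_density) auto
  finally show ?thesis by (simp add: mult.commute)
qed

lemma PF_set:
  assumes B: "B \<in> sets borel"
  shows "emeasure lebesgue {x::'a::euclidean_space. Tm x \<in> B} = emeasure lborel (B \<inter> {0..})"
proof -
  have "emeasure lebesgue {x::'a. Tm x \<in> B} = emeasure (distr lebesgue borel (Tm :: 'a \<Rightarrow> real)) B"
    using B by (subst emeasure_distr) (auto simp: vimage_def)
  also have "\<dots> = emeasure (density lborel (indicator {0..})) B" by (simp only: distr_Tm)
  also have "\<dots> = (\<integral>\<^sup>+x. indicator {0..} x * indicator B x \<partial>lborel)"
    using B by (intro emeasure_density) auto
  also have "\<dots> = (\<integral>\<^sup>+x. indicator (B \<inter> {0..}) x \<partial>lborel)"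
    by (rule nn_integral_cong) (auto simp: indicator_def)
  also have "\<dots> = emeasure lborel (B \<inter> {0..})" using B by simp
  finally show ?thesis .
qed

lemma radial_meas:
  assumes [measurable]: "\<phi> \<in> borel_measurable borel"
  shows "(\<lambda>x::'a::euclidean_space. \<phi> (Tm x)) \<in> borel_measurable lebesgue"
  by measurable

lemma radial_dist_eq:
  assumes [measurable]: "\<phi> \<in> borel_measurable borel"
  shows "dist_fn (\<lambda>x::'a::euclidean_space. \<phi> (Tm x)) \<mu> = emeasure lborel ({s. \<mu> < \<bar>\<phi> s\<bar>} \<inter> {0..})"
proof -
  have B: "{s. \<mu> < \<bar>\<phi> s\<bar>} \<in> sets borel"
  proof -
    have "{s\<in>space borel. \<mu> < \<bar>\<phi> s\<bar>} \<in> sets borel" by measurable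
    then show ?thesis by simp
  qed
  have "{x::'a. \<mu> < \<bar>\<phi> (Tm x)\<bar>} = {x. Tm x \<in> {s. \<mu> < \<bar>\<phi> s\<bar>}}" by simp
  then show ?thesis using PF_set[OF B] by simp
qed

lemma radial_dist_le:
  fixes \<phi> :: "real \<Rightarrow> real"
  assumes \<phi>m[measurable]: "\<phi> \<in> borel_measurable borel"
    and nonneg: "\<And>t. t > 0 \<Longrightarrow> \<phi> t \<ge> 0"
    and anti: "\<And>a b. 0 < a \<Longrightarrow> a \<le> b \<Longrightarrow> \<phi> b \<le> \<phi> a"
    and t: "t > 0" and le: "\<phi> t \<le> \<mu>"
  shows "dist_fn (\<lambda>x::'a::euclidean_space. \<phi> (Tm x)) \<mu> \<le> ennreal t"
proof -
  have sub: "{s. \<mu> < \<bar>\<phi> s\<bar>} \<inter> {0..} \<subseteq> {0..<t}"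
  proof
    fix s assume s: "s \<in> {s. \<mu> < \<bar>\<phi> s\<bar>} \<inter> {0..}"
    show "s \<in> {0..<t}"
    proof (rule ccontr)
      assume "s \<notin> {0..<t}"
      then have "t \<le> s" using s by auto
      then have "\<phi> s \<le> \<phi> t" "\<phi> s \<ge> 0" using anti[OF t] nonneg t by auto
      then show False using s le by auto
    qed
  qed
  have "emeasure lborel ({s. \<mu> < \<bar>\<phi> s\<bar>} \<inter> {0..}) \<le> emeasure lborel {0..<t}"
    by (rule emeasure_mono[OF sub]) simp
  moreover have "dist_fn (\<lambda>x::'a. \<phi> (Tm x)) \<mu> = emeasure lborel ({s. \<mu> < \<bar>\<phi> s\<bar>} \<inter> {0..})"
    by (rule radial_dist_eq[OF \<phi>m])
  ultimately show ?thesis using t by simp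
qed

lemma radial_dist_gt:
  fixes \<phi> :: "real \<Rightarrow> real"
  assumes \<phi>m[measurable]: "\<phi> \<in> borel_measurable borel"
    and anti: "\<And>a b. 0 < a \<Longrightarrow> a \<le> b \<Longrightarrow> \<phi> b \<le> \<phi> a"
    and t: "t > 0" and mu: "\<mu> \<ge> 0" and t': "t' > t" "\<phi> t' > \<mu>"
  shows "ennreal t < dist_fn (\<lambda>x::'a::euclidean_space. \<phi> (Tm x)) \<mu>"
proof -
  have sub: "{0<..t'} \<subseteq> {s. \<mu> < \<bar>\<phi> s\<bar>} \<inter> {0..}"
  proof
    fix s assume "s \<in> {0<..t'}"
    then have "\<phi> t' \<le> \<phi> s" "0 < s" using anti by auto
    then show "s \<in> {s. \<mu> < \<bar>\<phi> s\<bar>} \<inter> {0..}" using t' mu by auto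
  qed
  have B: "{s. \<mu> < \<bar>\<phi> s\<bar>} \<inter> {0..} \<in> sets borel"
  proof -
    have "{s\<in>space borel. \<mu> < \<bar>\<phi> s\<bar>} \<in> sets borel" by measurable
    then show ?thesis by simp
  qed
  have "emeasure lborel {0<..t'} \<le> emeasure lborel ({s. \<mu> < \<bar>\<phi> s\<bar>} \<inter> {0..})"
    by (rule emeasure_mono[OF sub]) (use B in simp)
  moreover have "emeasure lborel {0<..t'} = ennreal t'" using t t' by simp
  moreover have "ennreal t < ennreal t'" using t t' by (simp add: ennreal_lessI)
  moreover have "dist_fn (\<lambda>x::'a. \<phi> (Tm x)) \<mu> = emeasure lborel ({s. \<mu> < \<bar>\<phi> s\<bar>} \<inter> {0..})"
    by (rule radial_dist_eq[OF \<phi>m])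
  ultimately show ?thesis by (metis order_less_le_trans)
qed

lemma radial_rearr_le:
  fixes \<phi> :: "real \<Rightarrow> real"
  assumes \<phi>m[measurable]: "\<phi> \<in> borel_measurable borel"
    and nonneg: "\<And>t. t > 0 \<Longrightarrow> \<phi> t \<ge> 0"
    and anti: "\<And>a b. 0 < a \<Longrightarrow> a \<le> b \<Longrightarrow> \<phi> b \<le> \<phi> a"
    and t: "t > 0"
  shows "rearr (\<lambda>x::'a::euclidean_space. \<phi> (Tm x)) t \<le> ennreal (\<phi> t)"
proof (rule ennreal_le_epsilon)
  fix e :: real assume e: "0 < e"
  have "\<phi> t + e > 0" using nonneg[OF t] e by simp
  then have "rearr (\<lambda>x::'a. \<phi> (Tm x)) t \<le> ennreal (\<phi> t + e)"
    by (rule rearr_le_if) (rule radial_dist_le[OF \<phi>m nonneg anti t], auto simp: e less_imp_le)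
  then show "rearr (\<lambda>x::'a. \<phi> (Tm x)) t \<le> ennreal (\<phi> t) + ennreal e"
    using nonneg[OF t] e by (simp add: ennreal_plus)
qed

lemma radial_rearr:
  fixes \<phi> :: "real \<Rightarrow> real"
  assumes \<phi>m[measurable]: "\<phi> \<in> borel_measurable borel"
    and nonneg: "\<And>t. t > 0 \<Longrightarrow> \<phi> t \<ge> 0"
    and anti: "\<And>a b. 0 < a \<Longrightarrow> a \<le> b \<Longrightarrow> \<phi> b \<le> \<phi> a"
    and rc: "\<And>t \<mu>. t > 0 \<Longrightarrow> \<mu> < \<phi> t \<Longrightarrow> \<exists>t'>t. \<mu> < \<phi> t'"
    and t: "t > 0"
  shows "rearr (\<lambda>x::'a::euclidean_space. \<phi> (Tm x)) t = ennreal (\<phi> t)"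
proof (rule antisym)
  show "rearr (\<lambda>x::'a. \<phi> (Tm x)) t \<le> ennreal (\<phi> t)" by (rule radial_rearr_le[OF \<phi>m nonneg anti t])
  show "ennreal (\<phi> t) \<le> rearr (\<lambda>x::'a. \<phi> (Tm x)) t"
  proof (cases "rearr (\<lambda>x::'a. \<phi> (Tm x)) t = top")
    case True then show ?thesis by simp
  next
    case False
    then obtain r where r: "rearr (\<lambda>x::'a. \<phi> (Tm x)) t = ennreal r" "0 \<le> r"
      by (cases "rearr (\<lambda>x::'a. \<phi> (Tm x)) t") auto
    have "\<phi> t \<le> r"
    proof (cases "\<phi> t = 0")
      case True then show ?thesis using r by simp
    next
      case False
      then have pos: "0 < \<phi> t" using nonneg[OF t] by simp
      show ?thesis
      proof (rule dense_le_bounded[OF pos])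
        fix w assume w: "0 < w" "w < \<phi> t"
        obtain t' where t': "t' > t" "w < \<phi> t'" using rc[OF t w(2)] by blast
        have gt: "ennreal t < dist_fn (\<lambda>x::'a. \<phi> (Tm x)) w"
          by (rule radial_dist_gt[OF \<phi>m anti t less_imp_le[OF w(1)] t'])
        show "w \<le> r"
        proof (rule ccontr)
          assume "\<not> w \<le> r"
          then have "rearr (\<lambda>x::'a. \<phi> (Tm x)) t \<le> ennreal w" using r by simp
          from dist_le_if_rearr[OF radial_meas[OF \<phi>m] _ this] w
          have "dist_fn (\<lambda>x::'a. \<phi> (Tm x)) w \<le> ennreal t" by simp
          with gt show False using leD by blast
        qed
      qed
    qed
    then show ?thesis using r by simp
  qed
qed

lemma compact_leb: "compact (K::'a::euclidean_space set) \<Longrightarrow> K \<in> sets lebesgue"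
  by (simp add: compact_imp_closed borel_closed)

lemma L1_locI:
  fixes f :: "'a::euclidean_space \<Rightarrow> real"
  assumes fm[measurable]: "f \<in> borel_measurable lebesgue"
    and fin: "\<And>K. compact K \<Longrightarrow> (\<integral>\<^sup>+x. ennreal \<bar>f x\<bar> * indicator K x \<partial>lebesgue) < \<infinity>"
  shows "f \<in> L1_loc"
  unfolding L1_loc_def
proof (intro CollectI conjI allI impI fm)
  fix K :: "'a set" assume K: "compact K"
  have [measurable]: "K \<in> sets lebesgue" using compact_leb[OF K] .
  show "set_integrable lebesgue K f"
    unfolding set_integrable_def
  proof (rule integrableI_bounded)
    show "(\<lambda>x. indicator K x *\<^sub>R f x) \<in> borel_measurable lebesgue" by measurable
    have "(\<integral>\<^sup>+x. ennreal (norm (indicator K x *\<^sub>R f x)) \<partial>lebesgue) = (\<integral>\<^sup>+x. ennreal \<bar>f x\<bar> * indicator K x \<partial>lebesgue)"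
      by (rule nn_integral_cong) (auto simp: indicator_def)
    then show "(\<integral>\<^sup>+x. ennreal (norm (indicator K x *\<^sub>R f x)) \<partial>lebesgue) < \<infinity>" using fin[OF K] by simp
  qed
qed

lemma L1_loc_integrable:
  fixes f :: "'a::euclidean_space \<Rightarrow> real"
  assumes fm[measurable]: "f \<in> borel_measurable lebesgue"
    and fin: "(\<integral>\<^sup>+x. ennreal \<bar>f x\<bar> \<partial>lebesgue) < \<infinity>"
  shows "f \<in> L1_loc"
proof (rule L1_locI[OF fm])
  fix K :: "'a set"
  have "(\<integral>\<^sup>+x. ennreal \<bar>f x\<bar> * indicator K x \<partial>lebesgue) \<le> (\<integral>\<^sup>+x. ennreal \<bar>f x\<bar> \<partial>lebesgue)"
    by (rule nn_integral_mono) (auto simp: indicator_def)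
  then show "(\<integral>\<^sup>+x. ennreal \<bar>f x\<bar> * indicator K x \<partial>lebesgue) < \<infinity>" using fin by (rule order_le_less_trans)
qed

lemma L1_loc_bounded:
  fixes f :: "'a::euclidean_space \<Rightarrow> real"
  assumes fm[measurable]: "f \<in> borel_measurable lebesgue"
    and bnd: "\<And>x. \<bar>f x\<bar> \<le> 1"
  shows "f \<in> L1_loc"
proof (rule L1_locI[OF fm])
  fix K :: "'a set" assume K: "compact K"
  have "(\<integral>\<^sup>+x. ennreal \<bar>f x\<bar> * indicator K x \<partial>lebesgue) \<le> (\<integral>\<^sup>+x. indicator K x \<partial>lebesgue)"
    by (rule nn_integral_mono) (auto simp: indicator_def bnd)
  also have "\<dots> = emeasure lebesgue K" using compact_leb[OF K] by simp
  also have "\<dots> = emeasure lborel K" using K by (simp add: compact_imp_closed borel_closed)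
  also have "\<dots> < \<infinity>" by (rule emeasure_bounded_finite[OF compact_imp_bounded[OF K]])
  finally show "(\<integral>\<^sup>+x. ennreal \<bar>f x\<bar> * indicator K x \<partial>lebesgue) < \<infinity>" .
qed

lemma ln_powr_le:
  fixes y \<alpha> :: real
  assumes y: "y \<ge> 1" and a: "\<alpha> > 0"
  shows "ln y powr \<alpha> \<le> \<alpha> powr \<alpha> * y"
proof -
  have y0: "y > 0" using y by linarith
  have "ln (y powr (1/\<alpha>)) \<le> y powr (1/\<alpha>) - 1" using y0 by (intro ln_le_minus_one) simp
  then have "ln y / \<alpha> \<le> y powr (1/\<alpha>)" using y0 by (simp add: ln_powr)
  then have l1: "ln y \<le> \<alpha> * y powr (1/\<alpha>)" using a by (simp add: field_simps)
  have l0: "0 \<le> ln y" using y by simp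
  have "ln y powr \<alpha> \<le> (\<alpha> * y powr (1/\<alpha>)) powr \<alpha>" using l1 l0 a by (intro powr_mono2) auto
  also have "\<dots> = \<alpha> powr \<alpha> * y" using a y0 by (simp add: powr_mult powr_powr)
  finally show ?thesis .
qed

lemma logw_small_bound:
  assumes s: "0 < s" "s \<le> 1" and a: "\<alpha> > 0"
  shows "logw \<alpha> s * s \<le> \<alpha> powr \<alpha> * (exp 1 + 1)"
proof -
  have y: "exp 1 + 1 / s \<ge> 1" using s by (smt (verit) exp_ge_add_one_self divide_pos_pos)
  have "logw \<alpha> s \<le> \<alpha> powr \<alpha> * (exp 1 + 1 / s)" unfolding logw_def by (rule ln_powr_le[OF y a])
  then have "logw \<alpha> s * s \<le> \<alpha> powr \<alpha> * (exp 1 + 1 / s) * s" using s by (simp add: mult_right_mono)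
  also have "\<dots> = \<alpha> powr \<alpha> * (exp 1 * s + 1)" using s by (simp add: field_simps)
  also have "\<dots> \<le> \<alpha> powr \<alpha> * (exp 1 + 1)" using s by (intro mult_left_mono) auto
  finally show ?thesis .
qed

definition phi2 :: "real \<Rightarrow> real \<Rightarrow> real" where
  "phi2 q t = (1 + \<bar>t\<bar>) powr (-(1/q))"

lemma phi2_borel[measurable]: "phi2 q \<in> borel_measurable borel"
  unfolding phi2_def by measurable

lemma phi2_nonneg: "phi2 q t \<ge> 0"
  unfolding phi2_def by simp

lemma phi2_anti: "q > 0 \<Longrightarrow> 0 < a \<Longrightarrow> a \<le> b \<Longrightarrow> phi2 q b \<le> phi2 q a"
  unfolding phi2_def by (intro powr_mono2') auto

lemma phi2_le1: "q > 0 \<Longrightarrow> phi2 q t \<le> 1"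
  unfolding phi2_def using powr_mono2'[of "-(1/q)" 1 "1 + \<bar>t\<bar>"] by simp

lemma phi2_powr: "q > 0 \<Longrightarrow> phi2 q t powr q = 1 / (1 + \<bar>t\<bar>)"
proof -
  assume q: "q > 0"
  have "phi2 q t powr q = (1 + \<bar>t\<bar>) powr (-(1/q) * q)" unfolding phi2_def by (simp only: powr_powr)
  also have "-(1/q) * q = -1" using q by simp
  finally show ?thesis by (simp add: powr_minus_divide)
qed

lemma ex2_L1: "q > 0 \<Longrightarrow> (\<lambda>x::'a::euclidean_space. phi2 q (Tm x)) \<in> L1_loc"
  by (rule L1_loc_bounded) (auto intro: radial_meas simp: phi2_nonneg phi2_le1)

lemma enn_powr_ennreal: "x \<ge> 0 \<Longrightarrow> enn_powr (ennreal x) p = ennreal (x powr p)"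
  by (simp add: enn_powr_def)

lemma ex2_weak:
  assumes q: "q \<ge> 1" and a: "\<alpha> > 0"
  shows "weak_LqlogL_norm q \<alpha> (\<lambda>x::'a::euclidean_space. phi2 q (Tm x)) < top"
proof -
  have q0: "q > 0" using q by simp
  define K where "K = max (logw \<alpha> 1) (\<alpha> powr \<alpha> * (exp 1 + 1))"
  have bound: "logw \<alpha> s * s / (1 + s) \<le> K" if s: "s > 0" for s
  proof (cases "s \<le> 1")
    case True
    have "logw \<alpha> s * s / (1 + s) \<le> logw \<alpha> s * s"
      using s logw_nonneg[OF s, of \<alpha>] a by (simp add: divide_le_eq mult_le_cancel_left1 not_less)
    also have "\<dots> \<le> \<alpha> powr \<alpha> * (exp 1 + 1)" by (rule logw_small_bound[OF s True a])
    finally show ?thesis unfolding K_def by simp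
  next
    case False
    have "logw \<alpha> s \<le> logw \<alpha> 1" using False a by (intro logw_anti) auto
    moreover have "s / (1 + s) \<le> 1" using s by simp
    ultimately have "logw \<alpha> s * (s / (1 + s)) \<le> logw \<alpha> 1 * 1"
      using s logw_nonneg[OF s, of \<alpha>] a by (intro mult_mono) auto
    then show ?thesis unfolding K_def by simp
  qed
  have "weak_LqlogL_norm q \<alpha> (\<lambda>x::'a. phi2 q (Tm x)) \<le> enn_powr (ennreal K) (1/q)"
    unfolding weak_LqlogL_norm_def
  proof (rule SUP_least)
    fix s :: real assume "s \<in> {0<..}"
    then have s: "s > 0" by simp
    have "enn_powr (rearr (\<lambda>x::'a. phi2 q (Tm x)) s) q \<le> enn_powr (ennreal (phi2 q s)) q"
      by (intro enn_powr_mono radial_rearr_le q0) (auto simp: phi2_nonneg phi2_anti q0 s)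
    also have "\<dots> = ennreal (1 / (1 + s))" using s q0 by (simp add: enn_powr_ennreal phi2_nonneg phi2_powr)
    finally have "ennreal (logw \<alpha> s * s) * enn_powr (rearr (\<lambda>x::'a. phi2 q (Tm x)) s) q
        \<le> ennreal (logw \<alpha> s * s) * ennreal (1 / (1 + s))" by (rule mult_left_mono) simp
    also have "\<dots> = ennreal (logw \<alpha> s * s / (1 + s))"
      using s logw_nonneg[OF s, of \<alpha>] a by (simp add: ennreal_mult[symmetric])
    also have "\<dots> \<le> ennreal K" using bound[OF s] by (rule ennreal_leI)
    finally show "enn_powr (ennreal (logw \<alpha> s * s) * enn_powr (rearr (\<lambda>x::'a. phi2 q (Tm x)) s) q) (1 / q)
        \<le> enn_powr (ennreal K) (1 / q)" by (rule enn_powr_mono) (use q0 in simp)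
  qed
  also have "\<dots> < top" by (simp add: enn_powr_def)
  finally show ?thesis .
qed

lemma ex2_int:
  assumes q: "q > 0" and s: "s > 0"
  shows "ennreal (ln (1 + s)) \<le> SupE (\<lambda>x::'a::euclidean_space. phi2 q (Tm x)) q s"
proof -
  define E where "E = {x::'a. Tm x \<in> {..s}}"
  have Em[measurable]: "E \<in> sets lebesgue"
  proof -
    have "{x\<in>space lebesgue. Tm (x::'a) \<in> {..s}} \<in> sets lebesgue" by measurable
    then show ?thesis unfolding E_def by simp
  qed
  have "emeasure lebesgue E = emeasure lborel ({..s} \<inter> {0..})"
    unfolding E_def by (rule PF_set) simp
  also have "{..s} \<inter> {0::real..} = {0..s}" by auto
  finally have Es: "emeasure lebesgue E = ennreal s" using s by simp
  define g where "g t = ennreal (1 / (1 + \<bar>t\<bar>)) * indicator {..s} t" for t :: real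
  have gm: "g \<in> borel_measurable borel" unfolding g_def by measurable
  have "(\<integral>\<^sup>+x\<in>E. ennreal (\<bar>phi2 q (Tm x)\<bar> powr q) \<partial>lebesgue) = (\<integral>\<^sup>+x. g (Tm (x::'a)) \<partial>lebesgue)"
    by (rule nn_integral_cong) (simp add: g_def E_def phi2_nonneg phi2_powr q indicator_def)
  also have "\<dots> = (\<integral>\<^sup>+t\<in>{0..}. g t \<partial>lborel)" by (rule PF[OF gm])
  also have "\<dots> = (\<integral>\<^sup>+t. ennreal (1 / (1 + \<bar>t\<bar>)) * indicator {0..s} t \<partial>lborel)"
    by (rule nn_integral_cong) (auto simp: g_def indicator_def)
  also have "\<dots> = ln (1 + s) - ln (1 + 0)"
  proof (rule nn_integral_FTC_Icc)
    show "(\<lambda>t::real. 1 / (1 + \<bar>t\<bar>)) \<in> borel_measurable borel" by measurable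
    fix x :: real assume x: "x \<in> {0..s}"
    then have "1 + x > 0" by simp
    then have "((\<lambda>t. ln (1 + t)) has_real_derivative 1 / (1 + x)) (at x)"
      by (auto intro!: derivative_eq_intros)
    then show "((\<lambda>t. ln (1 + t)) has_real_derivative 1 / (1 + \<bar>x\<bar>)) (at x)" using x by simp
    show "0 \<le> 1 / (1 + \<bar>x\<bar>)" by simp
  qed (use s in simp)
  finally have eq: "(\<integral>\<^sup>+x\<in>E. ennreal (\<bar>phi2 q (Tm x)\<bar> powr q) \<partial>lebesgue) = ennreal (ln (1 + s))" by simp
  have "(\<integral>\<^sup>+x\<in>E. ennreal (\<bar>phi2 q (Tm x)\<bar> powr q) \<partial>lebesgue) \<le> SupE (\<lambda>x::'a. phi2 q (Tm x)) q s"
    by (rule SUP_upper) (use Em Es in auto)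
  then show ?thesis using eq by simp
qed

lemma ex2_frak:
  assumes q: "q \<ge> 1" and a: "\<alpha> > 0"
  shows "\<not> frak_LqlogL_norm q \<alpha> (\<lambda>x::'a::euclidean_space. phi2 q (Tm x)) < top"
proof
  have q0: "q > 0" using q by simp
  assume "frak_LqlogL_norm q \<alpha> (\<lambda>x::'a. phi2 q (Tm x)) < top"
  then obtain n where n: "frak_LqlogL_norm q \<alpha> (\<lambda>x::'a. phi2 q (Tm x)) < of_nat n"
    using ennreal_Ex_less_of_nat by blast
  define s where "s = exp ((real n + 1) powr q) - 1"
  have s: "s > 0" unfolding s_def by simp
  have ls: "ln (1 + s) = (real n + 1) powr q" unfolding s_def by simp
  have "ennreal (ln (1 + s)) \<le> ennreal (logw \<alpha> s) * SupE (\<lambda>x::'a. phi2 q (Tm x)) q s"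
  proof -
    have "ennreal (ln (1 + s)) \<le> 1 * SupE (\<lambda>x::'a. phi2 q (Tm x)) q s"
      using ex2_int[OF q0 s] by simp
    also have "\<dots> \<le> ennreal (logw \<alpha> s) * SupE (\<lambda>x::'a. phi2 q (Tm x)) q s"
      by (rule mult_right_mono) (use logw_ge1[OF s, of \<alpha>] a in auto)
    finally show ?thesis .
  qed
  then have "enn_powr (ennreal (ln (1 + s))) (1/q)
      \<le> enn_powr (ennreal (logw \<alpha> s) * SupE (\<lambda>x::'a. phi2 q (Tm x)) q s) (1/q)"
    by (rule enn_powr_mono) (use q0 in simp)
  also have "\<dots> \<le> frak_LqlogL_norm q \<alpha> (\<lambda>x::'a. phi2 q (Tm x))"
    unfolding frak_LqlogL_norm_def by (rule SUP_upper) (use s in simp)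
  finally have "ennreal (real n + 1) \<le> frak_LqlogL_norm q \<alpha> (\<lambda>x::'a. phi2 q (Tm x))"
    using ls q0 s by (simp add: enn_powr_ennreal powr_powr)
  moreover have "of_nat n < ennreal (real n + 1)"
    by (simp add: ennreal_of_nat_eq_real_of_nat ennreal_lessI)
  ultimately show False using n by simp
qed

definition cc :: "real \<Rightarrow> real" where "cc \<alpha> = exp (-(\<alpha>+1))"

definition hh :: "real \<Rightarrow> real \<Rightarrow> real" where
  "hh \<alpha> t = (if 0 < t \<and> t < 1 then 1 / (t * (-ln t) powr (\<alpha>+1)) else 0)"

definition phi1 :: "real \<Rightarrow> real \<Rightarrow> real \<Rightarrow> real" where
  "phi1 q \<alpha> t = (if 0 < t \<and> t < cc \<alpha> then hh \<alpha> t powr (1/q) else 0)"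

lemma cc_pos: "cc \<alpha> > 0" unfolding cc_def by simp

lemma cc_lt1: "\<alpha> \<ge> 0 \<Longrightarrow> cc \<alpha> < 1" unfolding cc_def by simp

lemma ln_lt_cc: "\<alpha> \<ge> 0 \<Longrightarrow> 0 < t \<Longrightarrow> t < cc \<alpha> \<Longrightarrow> \<alpha> + 1 < -ln t"
proof -
  assume t: "0 < t" "t < cc \<alpha>"
  then have "ln t < ln (cc \<alpha>)" using cc_pos by (simp add: ln_less_cancel_iff)
  then show "\<alpha> + 1 < -ln t" unfolding cc_def by simp
qed

lemma hh_borel[measurable]: "hh \<alpha> \<in> borel_measurable borel"
  unfolding hh_def by measurable

lemma phi1_borel[measurable]: "phi1 q \<alpha> \<in> borel_measurable borel"
  unfolding phi1_def by measurable

lemma hh_nonneg: "hh \<alpha> t \<ge> 0"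
  unfolding hh_def by simp

lemma phi1_nonneg: "phi1 q \<alpha> t \<ge> 0"
  unfolding phi1_def by simp

lemma key_mono:
  fixes u v \<beta> :: real
  assumes b: "\<beta> > 0" and u: "\<beta> \<le> u" and uv: "u \<le> v"
  shows "exp (-v) * v powr \<beta> \<le> exp (-u) * u powr \<beta>"
proof -
  have u0: "u > 0" using b u by simp
  have "v / u = 1 + (v - u) / u" using u0 by (simp add: field_simps)
  also have "\<dots> \<le> 1 + (v - u) / \<beta>" using u uv b by (simp add: frac_le)
  also have "\<dots> \<le> exp ((v - u) / \<beta>)" by (rule exp_ge_add_one_self)
  finally have "v / u \<le> exp ((v - u) / \<beta>)" .
  then have "(v / u) powr \<beta> \<le> exp ((v - u) / \<beta>) powr \<beta>"
    using u0 uv b by (intro powr_mono2) auto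
  also have "\<dots> = exp (v - u)" using b by (simp add: powr_def)
  finally have "v powr \<beta> / u powr \<beta> \<le> exp v / exp u" by (simp add: powr_divide exp_diff)
  then have "v powr \<beta> * exp u \<le> exp v * u powr \<beta>"
    using u0 by (simp add: field_simps)
  then show ?thesis by (simp add: exp_minus field_simps)
qed

lemma hh_anti:
  assumes a: "\<alpha> \<ge> 0" and ab: "0 < x" "x \<le> y" "y < cc \<alpha>"
  shows "hh \<alpha> y \<le> hh \<alpha> x"
proof -
  have y1: "y < 1" "x < 1" using ab cc_lt1[OF a] by auto
  define u where "u = -ln y"
  define v where "v = -ln x"
  have u: "\<alpha> + 1 \<le> u" unfolding u_def using ln_lt_cc[OF a _ ab(3)] ab by simp
  have uv: "u \<le> v" unfolding u_def v_def using ab by simp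
  have "exp (-v) * v powr (\<alpha>+1) \<le> exp (-u) * u powr (\<alpha>+1)"
    by (rule key_mono) (use a u uv in auto)
  then have le: "x * (-ln x) powr (\<alpha>+1) \<le> y * (-ln y) powr (\<alpha>+1)"
    unfolding u_def v_def using ab by simp
  have pos: "0 < x * (-ln x) powr (\<alpha>+1)" using ab y1 by (simp add: ln_less_zero)
  show ?thesis unfolding hh_def using ab y1 le pos by (simp add: frac_le)
qed

lemma phi1_anti:
  assumes q: "q > 0" and a: "\<alpha> \<ge> 0" and ab: "0 < x" "x \<le> y"
  shows "phi1 q \<alpha> y \<le> phi1 q \<alpha> x"
proof (cases "y < cc \<alpha>")
  case True
  have "hh \<alpha> y \<le> hh \<alpha> x" by (rule hh_anti[OF a ab True])
  then have "hh \<alpha> y powr (1/q) \<le> hh \<alpha> x powr (1/q)" using q by (intro powr_mono2) (auto simp: hh_nonneg)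
  then show ?thesis unfolding phi1_def using True ab by auto
next
  case False
  then show ?thesis unfolding phi1_def using phi1_nonneg[unfolded phi1_def] by auto
qed

lemma phi1_rc:
  assumes q: "q > 0" and a: "\<alpha> \<ge> 0" and t: "t > 0" and mu: "\<mu> < phi1 q \<alpha> t"
  shows "\<exists>t'>t. \<mu> < phi1 q \<alpha> t'"
proof (cases "t < cc \<alpha>")
  case False
  then have "phi1 q \<alpha> (t+1) = 0" "phi1 q \<alpha> t = 0" unfolding phi1_def by auto
  then show ?thesis using mu by (intro exI[of _ "t+1"]) auto
next
  case True
  define g where "g y = (1 / (y * (-ln y) powr (\<alpha>+1))) powr (1/q)" for y
  have t1: "t < 1" using True cc_lt1[OF a] by simp
  have lnpos: "0 < -ln t" using t t1 by (simp add: ln_less_zero)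
  have gt: "phi1 q \<alpha> t = g t" unfolding phi1_def hh_def g_def using True t t1 by simp
  have "isCont g t" unfolding g_def using t lnpos
    by (intro continuous_intros) auto
  then have "(g \<longlongrightarrow> g t) (at t)" by (simp add: isCont_def)
  then have "eventually (\<lambda>y. \<mu> < g y) (at t)" using mu gt by (intro order_tendstoD(1)) auto
  then obtain d where d: "d > 0" "\<And>y. y \<noteq> t \<Longrightarrow> dist y t < d \<Longrightarrow> \<mu> < g y"
    unfolding eventually_at by auto
  define m where "m = min d (cc \<alpha> - t)"
  define t' where "t' = t + m / 2"
  have m1: "m \<le> cc \<alpha> - t" "m \<le> d" "m > 0"
    unfolding m_def using d True by auto
  have t'1: "t < t'" unfolding t'_def using m1 by simp
  have t'2: "t' < cc \<alpha>" unfolding t'_def using m1 by simp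
  have "dist t' t = m / 2" unfolding t'_def dist_real_def using m1(3) by simp
  then have t'3: "dist t' t < d" using m1 by simp
  note t' = t'1 t'2 t'3
  have "\<mu> < g t'" using d(2)[of t'] t' by simp
  moreover have "phi1 q \<alpha> t' = g t'" unfolding phi1_def hh_def g_def using t' t cc_lt1[OF a] by auto
  ultimately show ?thesis using t' by auto
qed

definition GG :: "real \<Rightarrow> real \<Rightarrow> real" where
  "GG \<alpha> t = (-ln t) powr (-\<alpha>) / \<alpha>"

lemma GG_nonneg: "\<alpha> > 0 \<Longrightarrow> GG \<alpha> t \<ge> 0"
  unfolding GG_def by simp

lemma deriv_negln: "t > 0 \<Longrightarrow> ((\<lambda>t. - ln t) has_real_derivative (- (1 / t))) (at t)"
  by (auto intro!: derivative_eq_intros)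

lemma GG_deriv:
  assumes a: "\<alpha> > 0" and t: "0 < t" "t < 1"
  shows "(GG \<alpha> has_real_derivative hh \<alpha> t) (at t)"
proof -
  have l: "-ln t > 0" using t by (simp add: ln_less_zero)
  have "((\<lambda>t. (-ln t) powr (-\<alpha>)) has_real_derivative ((-\<alpha>) * (-ln t) powr (-\<alpha> - 1)) * (- (1 / t))) (at t)"
    by (rule DERIV_chain2[OF has_real_derivative_powr[OF l] deriv_negln[OF t(1)]])
  then have "((\<lambda>t. (-ln t) powr (-\<alpha>) / \<alpha>) has_real_derivative ((-\<alpha>) * (-ln t) powr (-\<alpha> - 1)) * (- (1 / t)) / \<alpha>) (at t)"
    by (rule DERIV_cdivide)
  moreover have "((-\<alpha>) * (-ln t) powr (-\<alpha> - 1)) * (- (1 / t)) / \<alpha> = hh \<alpha> t"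
  proof -
    have e: "-\<alpha> - 1 = -(\<alpha> + 1)" by simp
    have "(-ln t) powr (-\<alpha> - 1) = 1 / (-ln t) powr (\<alpha> + 1)"
      by (simp only: e powr_minus_divide)
    then show ?thesis unfolding hh_def using a t by (simp add: field_simps)
  qed
  ultimately show ?thesis unfolding GG_def by simp
qed

lemma int_hh_le:
  assumes a: "\<alpha> > 0" and m: "0 < m" "m < 1"
  shows "(\<integral>\<^sup>+t. ennreal (hh \<alpha> t) * indicator {0<..<m} t \<partial>lborel) \<le> ennreal (GG \<alpha> m)"
proof -
  define A where "A k = m / (real k + 2)" for k :: nat
  have A: "0 < A k" "A k < m" for k
  proof -
    have k2: "real k + 2 > 1" by simp
    show "0 < A k" unfolding A_def using m k2 by simp
    have "m / (real k + 2) < m / 1" using m k2 by (intro divide_strict_left_mono) auto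
    then show "A k < m" unfolding A_def by simp
  qed
  define F where "F k t = ennreal (hh \<alpha> t) * indicator {A k..m} t" for k t
  have inc: "incseq F"
  proof (intro incseq_SucI le_funI)
    fix k t
    have "A (Suc k) \<le> A k" unfolding A_def using m by (simp add: frac_le)
    then show "F k t \<le> F (Suc k) t" unfolding F_def by (auto simp: indicator_def)
  qed
  have Fm: "F k \<in> borel_measurable lborel" for k unfolding F_def by measurable
  have pw: "ennreal (hh \<alpha> t) * indicator {0<..<m} t \<le> (SUP k. F k t)" for t
  proof (cases "0 < t \<and> t < m")
    case True
    obtain k :: nat where k: "m / t < real k" using reals_Archimedean2 by blast
    have "A k \<le> t"
    proof -
      have "m < real k * t" using k True by (simp add: field_simps)
      also have "\<dots> \<le> (real k + 2) * t" using True by (simp add: mult_right_mono)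
      finally show ?thesis unfolding A_def using True by (simp add: field_simps)
    qed
    then have "F k t = ennreal (hh \<alpha> t) * indicator {0<..<m} t" unfolding F_def using True by (simp add: indicator_def)
    then show ?thesis by (metis SUP_upper UNIV_I)
  next
    case False
    then have "indicator {0<..<m} t = (0::ennreal)" by (simp add: indicator_def)
    then show ?thesis by simp
  qed
  have "(\<integral>\<^sup>+t. ennreal (hh \<alpha> t) * indicator {0<..<m} t \<partial>lborel) \<le> (\<integral>\<^sup>+t. (SUP k. F k t) \<partial>lborel)"
    by (rule nn_integral_mono) (rule pw)
  also have "\<dots> = (SUP k. \<integral>\<^sup>+t. F k t \<partial>lborel)" by (rule nn_integral_monotone_convergence_SUP[OF inc Fm])
  also have "\<dots> \<le> ennreal (GG \<alpha> m)"
  proof (rule SUP_least)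
    fix k
    have "(\<integral>\<^sup>+t. F k t \<partial>lborel) = ennreal (GG \<alpha> m - GG \<alpha> (A k))"
      unfolding F_def
    proof (rule nn_integral_FTC_Icc)
      fix x assume "x \<in> {A k..m}"
      then have x: "0 < x" "x < 1" using A[of k] m by auto
      show "(GG \<alpha> has_real_derivative hh \<alpha> x) (at x)" by (rule GG_deriv[OF a x])
      show "0 \<le> hh \<alpha> x" by (rule hh_nonneg)
    qed (use A[of k] in auto)
    also have "\<dots> \<le> ennreal (GG \<alpha> m)" using GG_nonneg[OF a, of "A k"] by (intro ennreal_leI) simp
    finally show "(\<integral>\<^sup>+t. F k t \<partial>lborel) \<le> ennreal (GG \<alpha> m)" .
  qed
  finally show ?thesis .
qed

definition kk :: "real \<Rightarrow> real" where
  "kk t = (if 0 < t \<and> t < 1 then 1 / (t * (-ln t)) else 0)"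

lemma kk_borel[measurable]: "kk \<in> borel_measurable borel"
  unfolding kk_def by measurable

lemma int_kk:
  assumes ab: "0 < a" "a \<le> b" "b < 1"
  shows "(\<integral>\<^sup>+t. ennreal (kk t) * indicator {a..b} t \<partial>lborel) = ennreal (ln (-ln a) - ln (-ln b))"
proof -
  have "(\<integral>\<^sup>+t. ennreal (kk t) * indicator {a..b} t \<partial>lborel) = ennreal ((- ln (-ln b)) - (- ln (-ln a)))"
  proof (rule nn_integral_FTC_Icc)
    fix x assume "x \<in> {a..b}"
    then have x: "0 < x" "x < 1" using ab by auto
    have l: "-ln x > 0" using x by (simp add: ln_less_zero)
    have "((\<lambda>t. - ln (-ln t)) has_real_derivative (- ((1 / (-ln x)) * (- (1 / x))))) (at x)"
      by (intro DERIV_minus DERIV_chain2[OF DERIV_ln_divide[OF l] deriv_negln[OF x(1)]])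
    moreover have "- ((1 / (-ln x)) * (- (1 / x))) = kk x" unfolding kk_def using x l by (simp add: field_simps)
    ultimately show "((\<lambda>t. - ln (-ln t)) has_real_derivative kk x) (at x)" by simp
    show "0 \<le> kk x" unfolding kk_def using x l by (simp add: mult_nonneg_nonpos)
  qed (use ab in auto)
  then show ?thesis by simp
qed

lemma SupE_le:
  fixes f :: "'a::euclidean_space \<Rightarrow> real"
  assumes fm[measurable]: "f \<in> borel_measurable lebesgue" and q0: "q > 0" and s: "s > 0"
  shows "SupE f q s \<le> (\<integral>\<^sup>+t\<in>{0<..<s}. enn_powr (rearr f t) q \<partial>lborel)"
proof (rule SUP_least)
  fix E :: "'a set" assume "E \<in> {E \<in> sets lebesgue. emeasure lebesgue E = ennreal s}"
  then show "(\<integral>\<^sup>+ x \<in> E. ennreal (\<bar>f x\<bar> powr q) \<partial>lebesgue) \<le> (\<integral>\<^sup>+t\<in>{0<..<s}. enn_powr (rearr f t) q \<partial>lborel)"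
    using s by (intro HL[OF fm q0]) auto
qed

lemma phi1_powr: "q > 0 \<Longrightarrow> phi1 q \<alpha> t powr q = (if 0 < t \<and> t < cc \<alpha> then hh \<alpha> t else 0)"
  unfolding phi1_def using hh_nonneg[of \<alpha> t] by (simp add: powr_powr)

lemma rearr1:
  assumes q: "q > 0" and a: "\<alpha> \<ge> 0" and t: "t > 0"
  shows "rearr (\<lambda>x::'a::euclidean_space. phi1 q \<alpha> (Tm x)) t = ennreal (phi1 q \<alpha> t)"
  by (rule radial_rearr[OF phi1_borel phi1_nonneg phi1_anti[OF q a] phi1_rc[OF q a] t])

lemma F1:
  assumes q: "q > 0" and a: "\<alpha> \<ge> 0" and t: "t > 0"
  shows "enn_powr (rearr (\<lambda>x::'a::euclidean_space. phi1 q \<alpha> (Tm x)) t) q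
       = ennreal (if t < cc \<alpha> then hh \<alpha> t else 0)"
  using t q by (simp add: rearr1[OF q a t] enn_powr_ennreal phi1_nonneg phi1_powr)

lemma powr_inv_le:
  fixes x q :: real
  assumes x: "x \<ge> 0" and q: "q \<ge> 1"
  shows "x powr (1/q) \<le> 1 + x"
proof (cases "x \<le> 1")
  case True
  then have "x powr (1/q) \<le> 1 powr (1/q)" using x q by (intro powr_mono2) auto
  then show ?thesis using x by simp
next
  case False
  then have "x powr (1/q) \<le> x powr 1" using q by (intro powr_mono) auto
  then show ?thesis using False by simp
qed

lemma ex1_L1:
  assumes q: "q \<ge> 1" and a: "\<alpha> > 0"
  shows "(\<lambda>x::'a::euclidean_space. phi1 q \<alpha> (Tm x)) \<in> L1_loc"
proof (rule L1_loc_integrable[OF radial_meas[OF phi1_borel]])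
  have q0: "q > 0" using q by simp
  have c: "0 < cc \<alpha>" "cc \<alpha> < 1" using cc_pos cc_lt1 a by auto
  have gm: "(\<lambda>t. ennreal \<bar>phi1 q \<alpha> t\<bar>) \<in> borel_measurable borel" by measurable
  have "(\<integral>\<^sup>+x. ennreal \<bar>phi1 q \<alpha> (Tm (x::'a))\<bar> \<partial>lebesgue) = (\<integral>\<^sup>+t\<in>{0..}. ennreal \<bar>phi1 q \<alpha> t\<bar> \<partial>lborel)"
    by (rule PF[OF gm])
  also have "\<dots> \<le> (\<integral>\<^sup>+t. indicator {0<..<cc \<alpha>} t + ennreal (hh \<alpha> t) * indicator {0<..<cc \<alpha>} t \<partial>lborel)"
  proof (rule nn_integral_mono)
    fix t :: real
    show "ennreal \<bar>phi1 q \<alpha> t\<bar> * indicator {0..} t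
        \<le> indicator {0<..<cc \<alpha>} t + ennreal (hh \<alpha> t) * indicator {0<..<cc \<alpha>} t"
    proof (cases "0 < t \<and> t < cc \<alpha>")
      case True
      have "phi1 q \<alpha> t \<le> 1 + hh \<alpha> t"
        unfolding phi1_def using True powr_inv_le[OF hh_nonneg q] by simp
      then have "ennreal \<bar>phi1 q \<alpha> t\<bar> \<le> ennreal (1 + hh \<alpha> t)"
        using phi1_nonneg by (intro ennreal_leI) simp
      then show ?thesis using True hh_nonneg by (simp add: ennreal_plus)
    next
      case False
      then have "phi1 q \<alpha> t = 0 \<or> t < 0" unfolding phi1_def by auto
      then show ?thesis by (auto simp: indicator_def)
    qed
  qed
  also have "\<dots> = emeasure lborel {0<..<cc \<alpha>} + (\<integral>\<^sup>+t. ennreal (hh \<alpha> t) * indicator {0<..<cc \<alpha>} t \<partial>lborel)"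
    by (subst nn_integral_add) auto
  also have "\<dots> \<le> ennreal (cc \<alpha>) + ennreal (GG \<alpha> (cc \<alpha>))"
    using c int_hh_le[OF a c] by (intro add_mono) auto
  also have "\<dots> < \<infinity>" by simp
  finally show "(\<integral>\<^sup>+x. ennreal \<bar>phi1 q \<alpha> (Tm (x::'a))\<bar> \<partial>lebesgue) < \<infinity>" .
qed

lemma logw_GG:
  assumes a: "\<alpha> > 0" and m: "0 < m" "m \<le> cc \<alpha>"
  shows "logw \<alpha> m * GG \<alpha> m \<le> 2 powr \<alpha> / \<alpha>"
proof -
  define u where "u = 1 / m"
  have e2: "exp 1 \<ge> (2::real)" using exp_ge_add_one_self[of 1] by simp
  have "exp (\<alpha> + 1) \<ge> exp 1" using a by simp
  moreover have "1 / m \<ge> 1 / cc \<alpha>" using m cc_pos by (simp add: frac_le)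
  moreover have "1 / cc \<alpha> = exp (\<alpha> + 1)" unfolding cc_def by (simp only: exp_minus divide_inverse inverse_inverse_eq mult_1)
  ultimately have ue: "u \<ge> exp 1" unfolding u_def by linarith
  have u0: "u > 0" unfolding u_def using m by simp
  have lnu: "ln u = - ln m" unfolding u_def using m by (simp add: ln_div)
  have lnu1: "ln u \<ge> 1" using ue u0 by (metis exp_le_cancel_iff exp_ln ln_exp order.trans less_le_not_le ln_le_cancel_iff exp_gt_zero)
  have "exp 1 + u \<le> u * u"
  proof -
    have "u * u - u = u * (u - 1)" by (simp add: algebra_simps)
    also have "\<dots> \<ge> exp 1 * (exp 1 - 1)" using ue e2 by (intro mult_mono) auto
    finally have "u * u - u \<ge> exp 1 * (exp 1 - 1)" .
    moreover have "exp 1 * (exp 1 - 1) \<ge> exp 1 * (1::real)" using e2 by (intro mult_left_mono) auto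
    ultimately show ?thesis by linarith
  qed
  then have "ln (exp 1 + u) \<le> ln (u * u)" using u0 by (subst ln_le_cancel_iff) (auto intro: add_pos_pos)
  also have "\<dots> = 2 * ln u" using u0 by (simp add: ln_mult)
  finally have l1: "ln (exp 1 + u) \<le> 2 * ln u" .
  have "logw \<alpha> m = ln (exp 1 + u) powr \<alpha>" unfolding logw_def u_def by simp
  also have "\<dots> \<le> (2 * ln u) powr \<alpha>"
  proof (rule powr_mono2)
    have "1 \<le> exp 1 + u" using u0 e2 by simp
    then show "0 \<le> ln (exp 1 + u)" by simp
  qed (use l1 a in auto)
  also have "\<dots> = 2 powr \<alpha> * ln u powr \<alpha>" by (simp add: powr_mult)
  finally have lw: "logw \<alpha> m \<le> 2 powr \<alpha> * ln u powr \<alpha>" .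
  have gg: "GG \<alpha> m = ln u powr (-\<alpha>) / \<alpha>" unfolding GG_def lnu by simp
  have "logw \<alpha> m * GG \<alpha> m \<le> 2 powr \<alpha> * ln u powr \<alpha> * (ln u powr (-\<alpha>) / \<alpha>)"
    using mult_right_mono[OF lw GG_nonneg[OF a, of m]] gg by simp
  also have "ln u powr \<alpha> * ln u powr (-\<alpha>) = 1" using lnu1 by (simp add: powr_add[symmetric])
  then have "2 powr \<alpha> * ln u powr \<alpha> * (ln u powr (-\<alpha>) / \<alpha>) = 2 powr \<alpha> / \<alpha>"
    by (simp add: field_simps)
  finally show ?thesis .
qed

lemma ex1_frak:
  assumes q: "q \<ge> 1" and a: "\<alpha> > 0"
  shows "frak_LqlogL_norm q \<alpha> (\<lambda>x::'a::euclidean_space. phi1 q \<alpha> (Tm x)) < top"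
proof -
  have q0: "q > 0" using q by simp
  have a0: "\<alpha> \<ge> 0" using a by simp
  define K where "K = 2 powr \<alpha> / \<alpha>"
  have "frak_LqlogL_norm q \<alpha> (\<lambda>x::'a. phi1 q \<alpha> (Tm x)) \<le> enn_powr (ennreal K) (1/q)"
    unfolding frak_LqlogL_norm_def
  proof (rule SUP_least)
    fix s :: real assume "s \<in> {0<..}"
    then have s: "s > 0" by simp
    define m where "m = min s (cc \<alpha>)"
    have m: "0 < m" "m \<le> cc \<alpha>" "m \<le> s" "m < 1" unfolding m_def using s cc_pos cc_lt1[OF a0] by auto
    have "SupE (\<lambda>x::'a. phi1 q \<alpha> (Tm x)) q s
        \<le> (\<integral>\<^sup>+t\<in>{0<..<s}. enn_powr (rearr (\<lambda>x::'a. phi1 q \<alpha> (Tm x)) t) q \<partial>lborel)"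
      by (rule SupE_le[OF radial_meas[OF phi1_borel] q0 s])
    also have "\<dots> \<le> (\<integral>\<^sup>+t. ennreal (hh \<alpha> t) * indicator {0<..<m} t \<partial>lborel)"
    proof (rule nn_integral_mono)
      fix t :: real
      show "enn_powr (rearr (\<lambda>x::'a. phi1 q \<alpha> (Tm x)) t) q * indicator {0<..<s} t
          \<le> ennreal (hh \<alpha> t) * indicator {0<..<m} t"
      proof (cases "0 < t \<and> t < s")
        case True
        then show ?thesis using F1[OF q0 a0, of t] hh_nonneg[of \<alpha> t]
          by (auto simp: indicator_def m_def)
      qed (auto simp: indicator_def)
    qed
    also have "\<dots> \<le> ennreal (GG \<alpha> m)" by (rule int_hh_le[OF a m(1) m(4)])
    finally have S: "SupE (\<lambda>x::'a. phi1 q \<alpha> (Tm x)) q s \<le> ennreal (GG \<alpha> m)" .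
    have "ennreal (logw \<alpha> s) * SupE (\<lambda>x::'a. phi1 q \<alpha> (Tm x)) q s \<le> ennreal (logw \<alpha> s) * ennreal (GG \<alpha> m)"
      by (rule mult_left_mono[OF S]) simp
    also have "\<dots> = ennreal (logw \<alpha> s * GG \<alpha> m)"
      using logw_nonneg[OF s a0] GG_nonneg[OF a] by (simp add: ennreal_mult)
    also have "\<dots> \<le> ennreal K"
    proof (rule ennreal_leI)
      have "logw \<alpha> s * GG \<alpha> m \<le> logw \<alpha> m * GG \<alpha> m"
        using logw_anti[OF m(1) m(3) a0] GG_nonneg[OF a] by (rule mult_right_mono)
      also have "\<dots> \<le> K" unfolding K_def by (rule logw_GG[OF a m(1) m(2)])
      finally show "logw \<alpha> s * GG \<alpha> m \<le> K" .
    qed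
    finally show "enn_powr (ennreal (logw \<alpha> s) * SupE (\<lambda>x::'a. phi1 q \<alpha> (Tm x)) q s) (1 / q)
        \<le> enn_powr (ennreal K) (1 / q)" by (rule enn_powr_mono) (use q0 in simp)
  qed
  also have "\<dots> < top" by (simp add: enn_powr_def)
  finally show ?thesis .
qed

lemma ex1_LqlogL:
  assumes q: "q \<ge> 1" and a: "\<alpha> > 0"
  shows "\<not> LqlogL_norm q \<alpha> (\<lambda>x::'a::euclidean_space. phi1 q \<alpha> (Tm x)) < top"
proof -
  have q0: "q > 0" using q by simp
  have a0: "\<alpha> \<ge> 0" using a by simp
  let ?X = "\<integral>\<^sup>+ s \<in> {0<..}. ennreal (logw \<alpha> s) * enn_powr (rearr (\<lambda>x::'a. phi1 q \<alpha> (Tm x)) s) q \<partial>lborel"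
  have big: "ennreal N \<le> ?X" if N: "N > 0" for N :: real
  proof -
    define b where "b = exp (-(\<alpha>+2))"
    define a' where "a' = exp (-(\<alpha>+2) * exp N)"
    have b: "0 < b" "b < cc \<alpha>" "b < 1" unfolding b_def cc_def using a by auto
    have "(\<alpha>+2) * 1 \<le> (\<alpha>+2) * exp N" using a N by (intro mult_left_mono) auto
    then have "(\<alpha>+2) \<le> (\<alpha>+2) * exp N" by (simp only: mult_1_right)
    then have "-((\<alpha>+2) * exp N) \<le> -(\<alpha>+2)" by (simp only: neg_le_iff_le)
    then have "-(\<alpha>+2) * exp N \<le> -(\<alpha>+2)" by (simp only: mult_minus_left)
    then have ab: "0 < a'" "a' \<le> b" unfolding a'_def b_def by auto
    have "(\<integral>\<^sup>+t. ennreal (kk t) * indicator {a'..b} t \<partial>lborel) \<le> ?X"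
    proof (rule nn_integral_mono)
      fix t :: real
      show "ennreal (kk t) * indicator {a'..b} t
          \<le> ennreal (logw \<alpha> t) * enn_powr (rearr (\<lambda>x::'a. phi1 q \<alpha> (Tm x)) t) q * indicator {0<..} t"
      proof (cases "a' \<le> t \<and> t \<le> b")
        case True
        then have t: "0 < t" "t < cc \<alpha>" "t < 1" using ab b by auto
        have l: "-ln t > 0" using t by (simp add: ln_less_zero)
        have lw: "(-ln t) powr \<alpha> \<le> logw \<alpha> t"
          unfolding logw_def
        proof (rule powr_mono2)
          have "ln (1 / t) \<le> ln (exp 1 + 1 / t)" using t by (subst ln_le_cancel_iff) (auto intro: add_pos_pos)
          then show "-ln t \<le> ln (exp 1 + 1 / t)" using t by (simp add: ln_div)
        qed (use a l in auto)
        have "kk t = (-ln t) powr \<alpha> * hh \<alpha> t"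
        proof -
          have "(-ln t) powr (\<alpha> + 1) = (-ln t) powr \<alpha> * (-ln t)" using l by (simp add: powr_add)
          then show ?thesis unfolding kk_def hh_def using t l by (simp add: field_simps)
        qed
        also have "\<dots> \<le> logw \<alpha> t * hh \<alpha> t" using lw hh_nonneg by (rule mult_right_mono)
        finally have "ennreal (kk t) \<le> ennreal (logw \<alpha> t) * ennreal (hh \<alpha> t)"
          using logw_nonneg[OF t(1) a0] hh_nonneg by (simp add: ennreal_mult[symmetric] ennreal_leI)
        then show ?thesis using True t F1[OF q0 a0 t(1), where 'a='a] by (simp add: indicator_def)
      next
        case False
        then have "indicator {a'..b} t = (0::ennreal)" by (simp add: indicator_def)
        then show ?thesis by simp
      qed
    qed
    moreover have "(\<integral>\<^sup>+t. ennreal (kk t) * indicator {a'..b} t \<partial>lborel) = ennreal (ln (-ln a') - ln (-ln b))"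
      by (rule int_kk[OF ab b(3)])
    moreover have "ln (-ln a') - ln (-ln b) = N"
    proof -
      have "-ln a' = (\<alpha>+2) * exp N" "-ln b = \<alpha>+2" unfolding a'_def b_def by (simp_all add: algebra_simps)
      then show ?thesis using a by (simp add: ln_mult)
    qed
    ultimately show ?thesis by simp
  qed
  have "?X = top"
  proof (rule ccontr)
    assume "?X \<noteq> top"
    then obtain n where n: "?X < of_nat n" using ennreal_Ex_less_of_nat top.not_eq_extremum by blast
    have "ennreal (real n + 1) \<le> ?X" by (rule big) simp
    moreover have "of_nat n < ennreal (real n + 1)"
      by (simp add: ennreal_of_nat_eq_real_of_nat ennreal_lessI)
    ultimately show False using n by simp
  qed
  then show ?thesis unfolding LqlogL_norm_def by (simp add: enn_powr_def)
qed

lemma L1_loc_meas: "f \<in> L1_loc \<Longrightarrow> f \<in> borel_measurable lebesgue"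
  unfolding L1_loc_def by simp

theorem propositionA1:
  fixes q \<alpha> :: real
  assumes "1 \<le> q" and "\<alpha> \<ge> 0"
  shows "(\<forall>f \<in> (LqlogL q \<alpha> :: ('a::euclidean_space \<Rightarrow> real) set).
            frak_LqlogL_norm q \<alpha> f \<le> LqlogL_norm q \<alpha> f)
       \<and> (\<forall>f \<in> (frak_LqlogL q \<alpha> :: ('a \<Rightarrow> real) set).
            weak_LqlogL_norm q \<alpha> f \<le> frak_LqlogL_norm q \<alpha> f)
       \<and> (\<alpha> > 0 \<longrightarrow>
            (LqlogL q \<alpha> :: ('a \<Rightarrow> real) set) \<subset> frak_LqlogL q \<alpha>
          \<and> (frak_LqlogL q \<alpha> :: ('a \<Rightarrow> real) set) \<subset> weak_LqlogL q \<alpha>)"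
proof (intro conjI ballI impI)
  note q = assms(1) and a0 = assms(2)
  have q0: "q > 0" using q by simp
  fix f :: "'a \<Rightarrow> real"
  assume "f \<in> LqlogL q \<alpha>"
  then show "frak_LqlogL_norm q \<alpha> f \<le> LqlogL_norm q \<alpha> f"
    unfolding LqlogL_def by (intro part1[OF L1_loc_meas q a0]) auto
next
  note q = assms(1) and a0 = assms(2)
  fix f :: "'a \<Rightarrow> real"
  assume "f \<in> frak_LqlogL q \<alpha>"
  then show "weak_LqlogL_norm q \<alpha> f \<le> frak_LqlogL_norm q \<alpha> f"
    unfolding frak_LqlogL_def by (intro part2[OF L1_loc_meas q a0]) auto
next
  note q = assms(1) and a0 = assms(2)
  assume a: "\<alpha> > 0"
  have q0: "q > 0" using q by simp
  have sub1: "(LqlogL q \<alpha> :: ('a \<Rightarrow> real) set) \<subseteq> frak_LqlogL q \<alpha>"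
  proof
    fix f :: "'a \<Rightarrow> real" assume f: "f \<in> LqlogL q \<alpha>"
    then have L: "f \<in> L1_loc" "LqlogL_norm q \<alpha> f < top" unfolding LqlogL_def by auto
    have "frak_LqlogL_norm q \<alpha> f \<le> LqlogL_norm q \<alpha> f" by (rule part1[OF L1_loc_meas[OF L(1)] q a0])
    then have "frak_LqlogL_norm q \<alpha> f < top" using L(2) by (rule order_le_less_trans)
    then show "f \<in> frak_LqlogL q \<alpha>" unfolding frak_LqlogL_def using L(1) by auto
  qed
  have sub2: "(frak_LqlogL q \<alpha> :: ('a \<Rightarrow> real) set) \<subseteq> weak_LqlogL q \<alpha>"
  proof
    fix f :: "'a \<Rightarrow> real" assume f: "f \<in> frak_LqlogL q \<alpha>"
    then have L: "f \<in> L1_loc" "frak_LqlogL_norm q \<alpha> f < top" unfolding frak_LqlogL_def by auto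
    have "weak_LqlogL_norm q \<alpha> f \<le> frak_LqlogL_norm q \<alpha> f" by (rule part2[OF L1_loc_meas[OF L(1)] q a0])
    then have "weak_LqlogL_norm q \<alpha> f < top" using L(2) by (rule order_le_less_trans)
    then show "f \<in> weak_LqlogL q \<alpha>" unfolding weak_LqlogL_def using L(1) by auto
  qed
  have e1: "(\<lambda>x::'a. phi1 q \<alpha> (Tm x)) \<in> frak_LqlogL q \<alpha>"
    unfolding frak_LqlogL_def using ex1_L1[OF q a] ex1_frak[OF q a] by auto
  have e1': "(\<lambda>x::'a. phi1 q \<alpha> (Tm x)) \<notin> LqlogL q \<alpha>"
    unfolding LqlogL_def using ex1_LqlogL[OF q a] by auto
  have e2: "(\<lambda>x::'a. phi2 q (Tm x)) \<in> weak_LqlogL q \<alpha>"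
    unfolding weak_LqlogL_def using ex2_L1[OF q0] ex2_weak[OF q a] by auto
  have e2': "(\<lambda>x::'a. phi2 q (Tm x)) \<notin> frak_LqlogL q \<alpha>"
    unfolding frak_LqlogL_def using ex2_frak[OF q a] by auto
  show "(LqlogL q \<alpha> :: ('a \<Rightarrow> real) set) \<subset> frak_LqlogL q \<alpha>"
    using sub1 e1 e1' by blast
  show "(frak_LqlogL q \<alpha> :: ('a \<Rightarrow> real) set) \<subset> weak_LqlogL q \<alpha>"
    using sub2 e2 e2' by blast
qed


end
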